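(* Let $N\ge 2$ and let $G$ be a connected oriented trivalent graph with $v$ vertices. Then $W_{sl(N)}(G)$, regarded as a function of $N$, is a polynomial in $N$ of degree at most $\frac{v}{2}+2$. (Consequently one may define $W_{sl(N)}^{\text{top}}(G)$ to be the coefficient of $N^{\frac{v}{2}+2}$ in this polynomial.)
   Context: An oriented trivalent graph is a finite graph (multiple edges and loops allowed) in which every vertex has degree 3, together with a cyclic ordering, at each vertex, of the three half-edges emanating from it. For a finite-dimensional metrized Lie algebra $L$ (a Lie algebra with an ad-invariant symmetric non-degenerate bilinear form $\langle\cdot,\cdot\rangle$), choose a basis $\{L_a\}_{a=1}^{\dim L}$, let $t_{ab}=\langle L_a,L_b\rangle$, let $(t^{ab})$ be the inverse matrix of $(t_{ab})$, and let $f_{abc}=\langle L_a,[L_b,L_c]\rangle$. For an oriented trivalent graph $G$, $W_L(G)$ is defined as follows: assign an index in $\{1,\dots,\dim L\}$ to every half-edge of $G$ and sum, over all such assignments, the product over all vertices of $f_{abc}$ (where $a,b,c$ are the indices on the three half-edges at that vertex read in their cyclic order) times the product over all edges of $t^{ab}$ (where $a,b$ are the indices on the two half-edges forming that edge). This is independent of the choice of basis. For $L=sl(N)$ the metric is the matrix trace in the defining representation: $\langle X,Y\rangle=\operatorname{tr}(XY)$. *)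

theory Defs
  imports Main "HOL-Library.FuncSet" "HOL-Computational_Algebra.Polynomial"
begin

text \<open>The half-edges are 0,...,3v-1; half-edge h is attached to vertex h div 3,
  and the cyclic order at vertex i is (3i, 3i+1, 3i+2).  The edges are given
  by a fixed-point-free involution e on the half-edges: {h, e h} is an edge.
  Loops and multiple edges are allowed.  Every oriented trivalent graph is
  isomorphic to one of this form.\<close>

definition otg :: "nat \<Rightarrow> (nat \<Rightarrow> nat) \<Rightarrow> bool" where
  "otg v e \<longleftrightarrow> (\<forall>h<3*v. e h < 3*v \<and> e h \<noteq> h \<and> e (e h) = h)"

definition otg_adj :: "nat \<Rightarrow> (nat \<Rightarrow> nat) \<Rightarrow> nat \<Rightarrow> nat \<Rightarrow> bool" where
  "otg_adj v e i j \<longleftrightarrow> (\<exists>h<3*v. h div 3 = i \<and> e h div 3 = j)"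

definition otg_connected :: "nat \<Rightarrow> (nat \<Rightarrow> nat) \<Rightarrow> bool" where
  "otg_connected v e \<longleftrightarrow> (\<forall>i<v. \<forall>j<v. (otg_adj v e)\<^sup>*\<^sup>* i j)"

text \<open>N x N complex matrices are functions nat => nat => complex vanishing outside
  the index range {0..<N}.\<close>

definition is_mat :: "nat \<Rightarrow> (nat \<Rightarrow> nat \<Rightarrow> complex) \<Rightarrow> bool" where
  "is_mat N X \<longleftrightarrow> (\<forall>i j. (N \<le> i \<or> N \<le> j) \<longrightarrow> X i j = 0)"

definition mmul :: "nat \<Rightarrow> (nat \<Rightarrow> nat \<Rightarrow> complex) \<Rightarrow> (nat \<Rightarrow> nat \<Rightarrow> complex) \<Rightarrow> (nat \<Rightarrow> nat \<Rightarrow> complex)" where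
  "mmul N X Y = (\<lambda>i j. if i < N \<and> j < N then (\<Sum>k<N. X i k * Y k j) else 0)"

definition mtr :: "nat \<Rightarrow> (nat \<Rightarrow> nat \<Rightarrow> complex) \<Rightarrow> complex" where
  "mtr N X = (\<Sum>i<N. X i i)"

definition mbracket :: "nat \<Rightarrow> (nat \<Rightarrow> nat \<Rightarrow> complex) \<Rightarrow> (nat \<Rightarrow> nat \<Rightarrow> complex) \<Rightarrow> (nat \<Rightarrow> nat \<Rightarrow> complex)" where
  "mbracket N X Y = (\<lambda>i j. mmul N X Y i j - mmul N Y X i j)"

definition sl :: "nat \<Rightarrow> (nat \<Rightarrow> nat \<Rightarrow> complex) set" where
  "sl N = {X. is_mat N X \<and> mtr N X = 0}"

definition lincomb :: "(nat \<Rightarrow> nat \<Rightarrow> complex) list \<Rightarrow> (nat \<Rightarrow> complex) \<Rightarrow> (nat \<Rightarrow> nat \<Rightarrow> complex)" where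
  "lincomb B c = (\<lambda>i j. \<Sum>a<length B. c a * (B ! a) i j)"

definition sl_basis :: "nat \<Rightarrow> (nat \<Rightarrow> nat \<Rightarrow> complex) list \<Rightarrow> bool" where
  "sl_basis N B \<longleftrightarrow>
     set B \<subseteq> sl N \<and>
     (\<forall>X\<in>sl N. \<exists>c. X = lincomb B c) \<and>
     (\<forall>c. lincomb B c = (\<lambda>i j. 0) \<longrightarrow> (\<forall>a<length B. c a = 0))"

definition tmet :: "nat \<Rightarrow> (nat \<Rightarrow> nat \<Rightarrow> complex) list \<Rightarrow> nat \<Rightarrow> nat \<Rightarrow> complex" where
  "tmet N B a b = mtr N (mmul N (B ! a) (B ! b))"

definition tinv :: "nat \<Rightarrow> (nat \<Rightarrow> nat \<Rightarrow> complex) list \<Rightarrow> nat \<Rightarrow> nat \<Rightarrow> complex" where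
  "tinv N B = (THE s. (\<forall>a b. (length B \<le> a \<or> length B \<le> b) \<longrightarrow> s a b = 0) \<and>
      (\<forall>a<length B. \<forall>c<length B.
         (\<Sum>b<length B. tmet N B a b * s b c) = (if a = c then 1 else 0)))"

definition fstr :: "nat \<Rightarrow> (nat \<Rightarrow> nat \<Rightarrow> complex) list \<Rightarrow> nat \<Rightarrow> nat \<Rightarrow> nat \<Rightarrow> complex" where
  "fstr N B a b c = mtr N (mmul N (B ! a) (mbracket N (B ! b) (B ! c)))"

definition W_sl :: "nat \<Rightarrow> (nat \<Rightarrow> nat \<Rightarrow> complex) list \<Rightarrow> nat \<Rightarrow> (nat \<Rightarrow> nat) \<Rightarrow> complex" where
  "W_sl N B v e =
     (\<Sum>\<sigma> \<in> {0..<3*v} \<rightarrow>\<^sub>E {0..<length B}.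
        (\<Prod>i<v. fstr N B (\<sigma> (3*i)) (\<sigma> (3*i+1)) (\<sigma> (3*i+2))) *
        (\<Prod>h \<in> {h. h < 3*v \<and> h < e h}. tinv N B (\<sigma> h) (\<sigma> (e h))))"

end

theory Submission
  imports Defs "Jordan_Normal_Form.Determinant"
begin

lemma mtr_mmul: "mtr N (mmul N X Y) = (\<Sum>i<N. \<Sum>k<N. X i k * Y k i)"
  by (simp add: mtr_def mmul_def)

lemma single_entry_sum:
  fixes Y :: "nat \<Rightarrow> nat \<Rightarrow> complex"
  assumes "p < N" "q < N"
  shows "(\<Sum>i<N. \<Sum>k<N. (if i = q \<and> k = p then 1 else 0) * Y k i) = Y p q"
proof -
  have "(\<Sum>i<N. \<Sum>k<N. (if i = q \<and> k = p then 1 else 0) * Y k i)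
      = (\<Sum>i<N. if i = q then Y p i else 0)"
  proof (intro sum.cong refl)
    fix i assume "i \<in> {..<N}"
    have "(\<Sum>k<N. (if i = q \<and> k = p then 1 else 0) * Y k i) = (\<Sum>k<N. if k = p then (if i = q then Y k i else 0) else 0)"
      by (intro sum.cong refl) auto
    also have "\<dots> = (if i = q then Y p i else 0)" using assms by (cases "i = q") simp_all
    finally show "(\<Sum>k<N. (if i = q \<and> k = p then 1 else 0) * Y k i) = (if i = q then Y p i else 0)" .
  qed
  also have "\<dots> = Y p q" using assms by simp
  finally show ?thesis .
qed

lemma nondeg:
  assumes N: "N \<ge> 1" and Y: "Y \<in> sl N"
    and H: "\<And>X. X \<in> sl N \<Longrightarrow> mtr N (mmul N X Y) = 0"
  shows "Y = (\<lambda>i j. 0)"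
proof -
  have off: "Y p q = 0" if "p < N" "q < N" "p \<noteq> q" for p q
  proof -
    define X :: "nat \<Rightarrow> nat \<Rightarrow> complex" where "X = (\<lambda>i k. if i = q \<and> k = p then 1 else 0)"
    have "X \<in> sl N" using that unfolding X_def sl_def is_mat_def mtr_def by (auto intro!: sum.neutral)
    hence "mtr N (mmul N X Y) = 0" by (rule H)
    thus ?thesis using single_entry_sum[OF that(1,2), of Y] by (simp add: mtr_mmul X_def)
  qed
  have diag: "Y p p = Y 0 0" if "p < N" for p
  proof -
    define X :: "nat \<Rightarrow> nat \<Rightarrow> complex" where
      "X = (\<lambda>i k. (if i = p \<and> k = p then 1 else 0) - (if i = 0 \<and> k = 0 then 1 else 0))"
    have "X \<in> sl N" using that N unfolding X_def sl_def is_mat_def mtr_def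
      by (auto simp: sum_subtractf)
    hence "mtr N (mmul N X Y) = 0" by (rule H)
    moreover have "mtr N (mmul N X Y) = Y p p - Y 0 0"
      using single_entry_sum[OF that that, of Y] single_entry_sum[of 0 N 0 Y] that N
      by (simp add: mtr_mmul X_def left_diff_distrib sum_subtractf)
    ultimately show ?thesis by simp
  qed
  have "mtr N Y = 0" using Y by (simp add: sl_def)
  moreover have "mtr N Y = (\<Sum>i<N. Y 0 0)" unfolding mtr_def by (rule sum.cong) (auto intro: diag)
  ultimately have "(\<Sum>i<N. Y 0 0) = 0" by simp
  hence "Y 0 0 = 0" using N by simp
  have "Y p q = 0" for p q
  proof (cases "p < N \<and> q < N")
    case True thus ?thesis using off[of p q] diag[of p] \<open>Y 0 0 = 0\<close> by (cases "p = q") auto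
  next
    case False thus ?thesis using Y by (auto simp: sl_def is_mat_def)
  qed
  thus ?thesis by (intro ext) simp
qed

lemma lincomb_sl: assumes "set B \<subseteq> sl N" shows "lincomb B c \<in> sl N"
proof -
  have "is_mat N (lincomb B c)"
    using assms unfolding is_mat_def lincomb_def sl_def by (auto intro!: sum.neutral simp: subset_iff)
  moreover have "mtr N (lincomb B c) = (\<Sum>a<length B. c a * mtr N (B ! a))"
    unfolding mtr_def lincomb_def by (simp add: sum_distrib_left sum.swap[of _ "{..<N}"])
  moreover have "\<dots> = 0" using assms by (auto intro!: sum.neutral simp: sl_def subset_iff)
  ultimately show ?thesis by (simp add: sl_def)
qed

lemma mtr_lincomb_left:
  "mtr N (mmul N (lincomb B c) Y) = (\<Sum>a<length B. c a * mtr N (mmul N (B ! a) Y))"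
  unfolding mtr_mmul lincomb_def
  by (simp add: sum_distrib_left sum_distrib_right sum.swap[of _ "{..<length B}"] mult.assoc)

lemma mtr_lincomb_right:
  "mtr N (mmul N X (lincomb B c)) = (\<Sum>a<length B. c a * mtr N (mmul N X (B ! a)))"
  unfolding mtr_mmul lincomb_def
  by (simp add: sum_distrib_left sum_distrib_right sum.swap[of _ "{..<length B}"] mult_ac)

definition Tm :: "nat \<Rightarrow> (nat \<Rightarrow> nat \<Rightarrow> complex) list \<Rightarrow> complex mat" where
  "Tm N B = mat (length B) (length B) (\<lambda>(a,b). tmet N B a b)"

lemma Tm_det:
  assumes N: "N \<ge> 2" and B: "sl_basis N B"
  shows "det (Tm N B) \<noteq> 0"
proof
  let ?L = "length B"
  have car: "Tm N B \<in> carrier_mat ?L ?L" by (simp add: Tm_def)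
  assume "det (Tm N B) = 0"
  then obtain x where x: "x \<in> carrier_vec ?L" "x \<noteq> 0\<^sub>v ?L" "Tm N B *\<^sub>v x = 0\<^sub>v ?L"
    using det_0_iff_vec_prod_zero_field[OF car] by auto
  define Y where "Y = lincomb B (\<lambda>b. x $ b)"
  have Ysl: "Y \<in> sl N" using B by (simp add: Y_def sl_basis_def lincomb_sl)
  have BaY: "mtr N (mmul N (B ! a) Y) = 0" if a: "a < ?L" for a
  proof -
    have "(Tm N B *\<^sub>v x) $ a = 0" using x a by simp
    moreover have "(Tm N B *\<^sub>v x) $ a = (\<Sum>b<?L. tmet N B a b * x $ b)"
      using a x(1) by (simp add: Tm_def scalar_prod_def atLeast0LessThan)
    moreover have "mtr N (mmul N (B ! a) Y) = (\<Sum>b<?L. x $ b * tmet N B a b)"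
      by (simp add: Y_def mtr_lincomb_right tmet_def)
    ultimately show ?thesis by (simp add: mult.commute)
  qed
  have "mtr N (mmul N X Y) = 0" if "X \<in> sl N" for X
  proof -
    obtain c where "X = lincomb B c" using B \<open>X \<in> sl N\<close> by (auto simp: sl_basis_def)
    thus ?thesis by (simp add: mtr_lincomb_left BaY)
  qed
  hence "Y = (\<lambda>i j. 0)" using nondeg[of N Y] N Ysl by simp
  hence "\<forall>b<?L. x $ b = 0" using B unfolding sl_basis_def Y_def by blast
  hence "x = 0\<^sub>v ?L" using x(1) by (intro eq_vecI) auto
  thus False using x(2) by simp
qed

lemma tinv_prop:
  assumes N: "N \<ge> 2" and B: "sl_basis N B"
  shows "(\<forall>a b. (length B \<le> a \<or> length B \<le> b) \<longrightarrow> tinv N B a b = 0) \<and>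
      (\<forall>a<length B. \<forall>c<length B.
         (\<Sum>b<length B. tmet N B a b * tinv N B b c) = (if a = c then 1 else 0))"
proof -
  let ?L = "length B"
  let ?T = "Tm N B"
  let ?P = "\<lambda>s. (\<forall>a b. (?L \<le> a \<or> ?L \<le> b) \<longrightarrow> s a b = 0) \<and>
      (\<forall>a<?L. \<forall>c<?L. (\<Sum>b<?L. tmet N B a b * s b c) = (if a = c then (1::complex) else 0))"
  have car: "?T \<in> carrier_mat ?L ?L" by (simp add: Tm_def)
  define S where "S = (1 / det ?T) \<cdot>\<^sub>m adj_mat ?T"
  have Scar: "S \<in> carrier_mat ?L ?L" using adj_mat[OF car] by (simp add: S_def)
  have TS: "?T * S = 1\<^sub>m ?L"
  proof -
    have "?T * S = (1 / det ?T) \<cdot>\<^sub>m (?T * adj_mat ?T)"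
      unfolding S_def using car adj_mat(1)[OF car] by (simp add: mult_smult_distrib)
    also have "\<dots> = 1\<^sub>m ?L" using adj_mat(2)[OF car] Tm_det[OF N B] by (auto intro!: eq_matI)
    finally show ?thesis .
  qed
  have ST: "S * ?T = 1\<^sub>m ?L" using mat_mult_left_right_inverse[OF car Scar TS] .
  define s where "s = (\<lambda>a b. if a < ?L \<and> b < ?L then S $$ (a,b) else 0)"
  have matprod: "(\<Sum>b<?L. tmet N B a b * t b c) = (?T * mat ?L ?L (\<lambda>(a,b). t a b)) $$ (a,c)"
    if "a < ?L" "c < ?L" for t a c
    using that by (simp add: Tm_def scalar_prod_def atLeast0LessThan)
  have Ps: "?P s"
  proof (intro conjI allI impI)
    fix a b assume "?L \<le> a \<or> ?L \<le> b" thus "s a b = 0" by (auto simp: s_def)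
  next
    fix a c assume ac: "a < ?L" "c < ?L"
    have "mat ?L ?L (\<lambda>(a,b). s a b) = S" using Scar by (intro eq_matI) (auto simp: s_def)
    thus "(\<Sum>b<?L. tmet N B a b * s b c) = (if a = c then 1 else 0)"
      using matprod[OF ac, of s] TS ac by simp
  qed
  have uniq: "s' = s" if "?P s'" for s'
  proof -
    define S' where "S' = mat ?L ?L (\<lambda>(a,b). s' a b)"
    have S'car: "S' \<in> carrier_mat ?L ?L" by (simp add: S'_def)
    have "?T * S' = 1\<^sub>m ?L"
    proof (rule eq_matI)
      fix i j assume "i < dim_row (1\<^sub>m ?L)" "j < dim_col (1\<^sub>m ?L)"
      hence ij: "i < ?L" "j < ?L" by auto
      show "(?T * S') $$ (i, j) = 1\<^sub>m ?L $$ (i, j)"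
        using matprod[OF ij, of s'] that ij by (simp add: S'_def)
    qed (auto simp: Tm_def S'_def)
    hence "S' = S"
      using Scar S'car car ST
      by (metis assoc_mult_mat left_mult_one_mat right_mult_one_mat)
    show ?thesis
    proof (intro ext)
      fix a b show "s' a b = s a b"
      proof (cases "a < ?L \<and> b < ?L")
        case True
        hence "S' $$ (a,b) = s' a b" by (simp add: S'_def)
        thus ?thesis using True \<open>S' = S\<close> by (simp add: s_def)
      next
        case False thus ?thesis using that by (auto simp: s_def)
      qed
    qed
  qed
  have "tinv N B = s" unfolding tinv_def
  proof (rule the_equality)
    show "?P s" by (rule Ps)
  next
    fix s' assume "?P s'" thus "s' = s" by (rule uniq)
  qed
  thus ?thesis using Ps by (simp only:)
qed

lemma completeness:
  assumes N: "N \<ge> 2" and B: "sl_basis N B" and idx: "i < N" "j < N" "k < N" "l < N"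
  shows "(\<Sum>a<length B. \<Sum>b<length B. tinv N B a b * (B!a) i j * (B!b) k l)
     = (if j = k \<and> i = l then 1 else 0) - (if i = j \<and> k = l then 1 / of_nat N else 0)"
proof -
  let ?L = "length B"
  let ?s = "tinv N B"
  have tp: "\<And>a c. a < ?L \<Longrightarrow> c < ?L \<Longrightarrow> (\<Sum>b<?L. tmet N B a b * ?s b c) = (if a = c then 1 else 0)"
    using tinv_prop[OF N B] by blast
  define Xin :: "nat \<Rightarrow> nat \<Rightarrow> complex" where "Xin = (\<lambda>r c.
     (if r = j \<and> c = i then 1 else 0) - (if i = j \<and> r = c then 1 / of_nat N else 0))"
  define X :: "nat \<Rightarrow> nat \<Rightarrow> complex" where "X = (\<lambda>r c. if r < N \<and> c < N then Xin r c else 0)"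
  have Xin: "r < N \<Longrightarrow> c < N \<Longrightarrow> X r c = (if r = j \<and> c = i then 1 else 0) - (if i = j \<and> r = c then 1 / of_nat N else 0)" for r c
    by (simp add: X_def Xin_def)
  have Nne: "(of_nat N :: complex) \<noteq> 0" using N by simp
  have "mtr N X = (\<Sum>r<N. (if r = j \<and> r = i then 1 else 0) - (if i = j then 1 / of_nat N else 0))"
    unfolding mtr_def by (intro sum.cong refl) (simp add: Xin)
  also have "\<dots> = (\<Sum>r<N. (if r = j \<and> r = i then 1 else 0)) - of_nat N * (if i = j then 1 / of_nat N else 0)"
    by (simp add: sum_subtractf)
  also have "(\<Sum>r<N. (if r = j \<and> r = i then 1 else 0)) = (if i = j then (1::complex) else 0)"
  proof (cases "i = j")
    case True thus ?thesis using idx by simp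
  next
    case False
    have "(\<Sum>r<N. if r = j \<and> r = i then (1::complex) else 0) = 0" using False by (intro sum.neutral) auto
    thus ?thesis using False by simp
  qed
  finally have mX: "mtr N X = (if i = j then 1 else 0) - of_nat N * (if i = j then 1 / of_nat N else 0)" .
  have z: "(if i = j then 1 else 0) - of_nat N * (if i = j then 1 / of_nat N else 0) = (0::complex)"
    using Nne by (cases "i = j") (simp_all only: if_True if_False, simp_all)
  have "mtr N X = 0" using mX z by (simp only:)
  moreover have "is_mat N X" unfolding is_mat_def X_def by simp
  ultimately have Xsl: "X \<in> sl N" by (simp add: sl_def)
  then obtain c where Xc: "X = lincomb B c" using B by (auto simp: sl_basis_def)
  have Bsl: "a < ?L \<Longrightarrow> B ! a \<in> sl N" for a using B by (auto simp: sl_basis_def)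
  have key1: "mtr N (mmul N X (B!a)) = (B!a) i j" if a: "a < ?L" for a
  proof -
    have "mtr N (mmul N X (B!a)) = (\<Sum>r<N. \<Sum>q<N. ((if r = j \<and> q = i then 1 else 0) * (B!a) q r
       - (if i = j then 1 / of_nat N else 0) * (if r = q then (B!a) q r else 0)))"
      unfolding mtr_mmul by (intro sum.cong refl) (auto simp: Xin algebra_simps)
    also have "\<dots> = (\<Sum>r<N. \<Sum>q<N. (if r = j \<and> q = i then 1 else 0) * (B!a) q r)
       - (if i = j then 1 / of_nat N else 0) * (\<Sum>r<N. \<Sum>q<N. (if r = q then (B!a) q r else 0))"
      by (simp only: sum_subtractf sum_distrib_left)
    also have "(\<Sum>r<N. \<Sum>q<N. (if r = q then (B!a) q r else 0)) = mtr N (B!a)"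
      unfolding mtr_def by (intro sum.cong refl) (simp add: sum.delta)
    also have "mtr N (B!a) = 0" using Bsl[OF a] by (simp add: sl_def)
    also have "(\<Sum>r<N. \<Sum>q<N. (if r = j \<and> q = i then 1 else 0) * (B!a) q r) = (B!a) i j"
      by (rule single_entry_sum[OF idx(1,2)])
    finally show ?thesis by simp
  qed
  have key2: "(\<Sum>a<?L. (B!a) i j * ?s a b) = c b" if b: "b < ?L" for b
  proof -
    have "(\<Sum>a<?L. (B!a) i j * ?s a b) = (\<Sum>a<?L. (\<Sum>d<?L. c d * tmet N B d a) * ?s a b)"
    proof (intro sum.cong refl)
      fix a assume "a \<in> {..<?L}"
      hence "(B!a) i j = mtr N (mmul N X (B!a))" using key1 by simp
      also have "\<dots> = (\<Sum>d<?L. c d * tmet N B d a)" unfolding Xc mtr_lincomb_left tmet_def ..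
      finally show "(B!a) i j * ?s a b = (\<Sum>d<?L. c d * tmet N B d a) * ?s a b" by (simp only:)
    qed
    also have "\<dots> = (\<Sum>a<?L. \<Sum>d<?L. c d * (tmet N B d a * ?s a b))"
      by (simp add: sum_distrib_right mult.assoc)
    also have "\<dots> = (\<Sum>d<?L. \<Sum>a<?L. c d * (tmet N B d a * ?s a b))"
      by (rule sum.swap)
    also have "\<dots> = (\<Sum>d<?L. c d * (\<Sum>a<?L. tmet N B d a * ?s a b))"
      by (simp add: sum_distrib_left)
    also have "\<dots> = (\<Sum>d<?L. if d = b then c d else 0)"
      by (intro sum.cong refl) (simp add: tp b)
    also have "\<dots> = c b" using b by simp
    finally show ?thesis .
  qed
  have "(\<Sum>a<?L. \<Sum>b<?L. ?s a b * (B!a) i j * (B!b) k l)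
      = (\<Sum>b<?L. (\<Sum>a<?L. (B!a) i j * ?s a b) * (B!b) k l)"
  proof -
    have "(\<Sum>a<?L. \<Sum>b<?L. ?s a b * (B!a) i j * (B!b) k l) = (\<Sum>b<?L. \<Sum>a<?L. ?s a b * (B!a) i j * (B!b) k l)"
      by (rule sum.swap)
    also have "\<dots> = (\<Sum>b<?L. (\<Sum>a<?L. (B!a) i j * ?s a b) * (B!b) k l)"
      by (intro sum.cong refl) (simp add: sum_distrib_right sum_distrib_left mult_ac)
    finally show ?thesis .
  qed
  also have "\<dots> = (\<Sum>b<?L. c b * (B!b) k l)" by (intro sum.cong refl) (simp add: key2)
  also have "\<dots> = X k l" by (simp add: Xc lincomb_def)
  also have "\<dots> = (if j = k \<and> i = l then 1 else 0) - (if i = j \<and> k = l then 1 / of_nat N else 0)"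
    using idx by (simp add: Xin)
  finally show ?thesis .
qed

definition F3 :: "nat \<Rightarrow> (nat \<Rightarrow> nat \<Rightarrow> complex) \<Rightarrow> (nat \<Rightarrow> nat \<Rightarrow> complex) \<Rightarrow> (nat \<Rightarrow> nat \<Rightarrow> complex) \<Rightarrow> complex" where
  "F3 N A B C = mtr N (mmul N A (mbracket N B C))"

definition sgnb :: "bool \<Rightarrow> complex" where "sgnb b = (if b then -1 else 1)"
definition rot :: "bool \<Rightarrow> nat \<Rightarrow> nat" where "rot b r = (if b then (r + 2) mod 3 else (r + 1) mod 3)"
definition comp3 :: "nat \<times> nat \<times> nat \<Rightarrow> nat \<Rightarrow> nat" where
  "comp3 t r = (if r = 0 then fst t else if r = 1 then fst (snd t) else snd (snd t))"
definition T3 :: "nat \<Rightarrow> (nat \<times> nat \<times> nat) set" where "T3 N = {..<N} \<times> {..<N} \<times> {..<N}"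

lemma finite_T3[simp]: "finite (T3 N)" by (simp add: T3_def)

lemma F3_explicit:
  "F3 N A B C = (\<Sum>x<N. \<Sum>y<N. A x y * (\<Sum>z<N. B y z * C z x - C y z * B z x))"
  unfolding F3_def mtr_mmul
  by (intro sum.cong refl) (simp add: mbracket_def mmul_def sum_subtractf)

lemma sum_T3: "(\<Sum>t\<in>T3 N. g t) = (\<Sum>x<N. \<Sum>y<N. \<Sum>z<N. g (x, y, z))"
  unfolding T3_def by (simp add: sum.cartesian_product)

lemma F3_expand:
  "F3 N (M 0) (M 1) (M 2) = (\<Sum>b\<in>UNIV. sgnb b * (\<Sum>t\<in>T3 N. \<Prod>r<3. M r (comp3 t r) (comp3 t (rot b r))))"
proof -
  have U: "(UNIV :: bool set) = {False, True}" by auto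
  have p3: "(\<Prod>r<3. f r) = f 0 * f 1 * f 2" for f :: "nat \<Rightarrow> complex"
  proof -
    have "{..<3::nat} = {0,1,2}" by auto
    thus ?thesis by (simp add: mult_ac)
  qed
  have c: "comp3 (x,y,z) 0 = x" "comp3 (x,y,z) 1 = y" "comp3 (x,y,z) 2 = z" for x y z
    by (simp_all add: comp3_def)
  have r: "rot False 0 = 1" "rot False 1 = 2" "rot False 2 = 0" "rot True 0 = 2" "rot True 1 = 0" "rot True 2 = 1"
    by (simp_all add: rot_def)
  have s1: "(\<Sum>t\<in>T3 N. \<Prod>r<3. M r (comp3 t r) (comp3 t (rot False r)))
      = (\<Sum>x<N. \<Sum>y<N. \<Sum>z<N. M 0 x y * M 1 y z * M 2 z x)"
    unfolding sum_T3 p3 c r ..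
  have s2: "(\<Sum>t\<in>T3 N. \<Prod>r<3. M r (comp3 t r) (comp3 t (rot True r)))
      = (\<Sum>x<N. \<Sum>y<N. \<Sum>z<N. M 0 x z * M 1 y x * M 2 z y)"
    unfolding sum_T3 p3 c r ..
  have s3: "(\<Sum>x<N. \<Sum>y<N. \<Sum>z<N. M 0 x z * M 1 y x * M 2 z y)
      = (\<Sum>x<N. \<Sum>z<N. \<Sum>y<N. M 0 x z * M 2 z y * M 1 y x)"
  proof (rule sum.cong[OF refl])
    fix x
    have "(\<Sum>y<N. \<Sum>z<N. M 0 x z * M 1 y x * M 2 z y) = (\<Sum>z<N. \<Sum>y<N. M 0 x z * M 1 y x * M 2 z y)"
      by (rule sum.swap)
    also have "\<dots> = (\<Sum>z<N. \<Sum>y<N. M 0 x z * M 2 z y * M 1 y x)" by (simp add: mult_ac)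
    finally show "(\<Sum>y<N. \<Sum>z<N. M 0 x z * M 1 y x * M 2 z y) = (\<Sum>z<N. \<Sum>y<N. M 0 x z * M 2 z y * M 1 y x)" .
  qed
  have "F3 N (M 0) (M 1) (M 2) = (\<Sum>x<N. \<Sum>y<N. \<Sum>z<N. M 0 x y * M 1 y z * M 2 z x)
       - (\<Sum>x<N. \<Sum>y<N. \<Sum>z<N. M 0 x y * M 2 y z * M 1 z x)"
    unfolding F3_explicit
    by (simp add: sum_subtractf sum_distrib_left right_diff_distrib mult_ac)
  thus ?thesis unfolding U using s1 s2 s3 by (simp add: sgnb_def)
qed

lemma prod_blocks: fixes f :: "nat \<Rightarrow> 'a::comm_monoid_mult" and v :: nat
  shows "(\<Prod>h<3*v. f h) = (\<Prod>i<v. \<Prod>r<3. f (3*i+r))"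
proof (induction v)
  case 0 thus ?case by simp
next
  case (Suc v)
  have e: "3 * Suc v = Suc (Suc (Suc (3*v)))" by simp
  have l: "{..<3::nat} = {0,1,2}" by auto
  have "(\<Prod>h<3 * Suc v. f h) = (\<Prod>h<3*v. f h) * (f (3*v) * f (3*v+1) * f (3*v+2))"
    unfolding e by (simp add: mult_ac)
  thus ?case using Suc by (simp add: l mult_ac)
qed

lemma rot_lt: "rot b r < 3" by (simp add: rot_def)

definition Xf :: "(nat \<Rightarrow> nat \<times> nat \<times> nat) \<Rightarrow> nat \<Rightarrow> nat" where
  "Xf y h = comp3 (y (h div 3)) (h mod 3)"
definition rho :: "(nat \<Rightarrow> bool) \<Rightarrow> nat \<Rightarrow> nat" where
  "rho \<epsilon> h = 3 * (h div 3) + rot (\<epsilon> (h div 3)) (h mod 3)"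
definition sgnp :: "(nat \<Rightarrow> bool) \<Rightarrow> nat \<Rightarrow> complex" where
  "sgnp \<epsilon> v = (\<Prod>i<v. sgnb (\<epsilon> i))"
definition G :: "nat \<Rightarrow> (nat \<Rightarrow> nat \<Rightarrow> nat \<Rightarrow> complex) \<Rightarrow> nat \<Rightarrow> complex" where
  "G N M v = (\<Prod>i<v. F3 N (M (3*i)) (M (3*i+1)) (M (3*i+2)))"
definition EPS :: "nat \<Rightarrow> (nat \<Rightarrow> bool) set" where "EPS v = PiE {..<v} (\<lambda>_. UNIV)"
definition YS :: "nat \<Rightarrow> nat \<Rightarrow> (nat \<Rightarrow> nat \<times> nat \<times> nat) set" where
  "YS N v = PiE {..<v} (\<lambda>_. T3 N)"

lemma finite_EPS[simp]: "finite (EPS v)" by (simp add: EPS_def finite_PiE)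
lemma finite_YS[simp]: "finite (YS N v)" by (simp add: YS_def finite_PiE)

lemma div_mod_3i: "r < 3 \<Longrightarrow> (3*i+r) div 3 = i" "r < 3 \<Longrightarrow> (3*i+r) mod 3 = r" for i r :: nat
  by simp_all

lemma rho_3i: "r < 3 \<Longrightarrow> rho \<epsilon> (3*i+r) = 3*i + rot (\<epsilon> i) r"
  by (simp add: rho_def)

lemma Xf_3i: "r < 3 \<Longrightarrow> Xf y (3*i+r) = comp3 (y i) r"
  by (simp add: Xf_def)

lemma G_expand:
  "G N M v = (\<Sum>\<epsilon>\<in>EPS v. sgnp \<epsilon> v * (\<Sum>y\<in>YS N v. \<Prod>h<3*v. M h (Xf y h) (Xf y (rho \<epsilon> h))))"
proof -
  have "G N M v = (\<Prod>i<v. \<Sum>b\<in>UNIV. sgnb b * (\<Sum>t\<in>T3 N. \<Prod>r<3. M (3*i+r) (comp3 t r) (comp3 t (rot b r))))"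
    unfolding G_def
  proof (rule prod.cong[OF refl])
    fix i
    show "F3 N (M (3*i)) (M (3*i+1)) (M (3*i+2)) = (\<Sum>b\<in>UNIV. sgnb b * (\<Sum>t\<in>T3 N. \<Prod>r<3. M (3*i+r) (comp3 t r) (comp3 t (rot b r))))"
      using F3_expand[of N "\<lambda>r. M (3*i+r)"] by simp
  qed
  also have "\<dots> = (\<Sum>\<epsilon>\<in>EPS v. \<Prod>i<v. sgnb (\<epsilon> i) * (\<Sum>t\<in>T3 N. \<Prod>r<3. M (3*i+r) (comp3 t r) (comp3 t (rot (\<epsilon> i) r))))"
    unfolding EPS_def by (rule prod_sum_PiE) auto
  also have "\<dots> = (\<Sum>\<epsilon>\<in>EPS v. sgnp \<epsilon> v * (\<Sum>y\<in>YS N v. \<Prod>h<3*v. M h (Xf y h) (Xf y (rho \<epsilon> h))))"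
  proof (rule sum.cong[OF refl])
    fix \<epsilon>
    have "(\<Prod>i<v. sgnb (\<epsilon> i) * (\<Sum>t\<in>T3 N. \<Prod>r<3. M (3*i+r) (comp3 t r) (comp3 t (rot (\<epsilon> i) r))))
        = sgnp \<epsilon> v * (\<Prod>i<v. \<Sum>t\<in>T3 N. \<Prod>r<3. M (3*i+r) (comp3 t r) (comp3 t (rot (\<epsilon> i) r)))"
      unfolding sgnp_def by (rule prod.distrib)
    also have "(\<Prod>i<v. \<Sum>t\<in>T3 N. \<Prod>r<3. M (3*i+r) (comp3 t r) (comp3 t (rot (\<epsilon> i) r)))
        = (\<Sum>y\<in>YS N v. \<Prod>i<v. \<Prod>r<3. M (3*i+r) (comp3 (y i) r) (comp3 (y i) (rot (\<epsilon> i) r)))"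
      unfolding YS_def by (rule prod_sum_PiE) auto
    also have "\<dots> = (\<Sum>y\<in>YS N v. \<Prod>h<3*v. M h (Xf y h) (Xf y (rho \<epsilon> h)))"
    proof (rule sum.cong[OF refl])
      fix y
      show "(\<Prod>i<v. \<Prod>r<3. M (3*i+r) (comp3 (y i) r) (comp3 (y i) (rot (\<epsilon> i) r)))
          = (\<Prod>h<3*v. M h (Xf y h) (Xf y (rho \<epsilon> h)))"
        unfolding prod_blocks
        by (intro prod.cong refl) (simp add: rho_3i Xf_3i rot_lt)
    qed
    finally show "(\<Prod>i<v. sgnb (\<epsilon> i) * (\<Sum>t\<in>T3 N. \<Prod>r<3. M (3*i+r) (comp3 t r) (comp3 t (rot (\<epsilon> i) r))))
        = sgnp \<epsilon> v * (\<Sum>y\<in>YS N v. \<Prod>h<3*v. M h (Xf y h) (Xf y (rho \<epsilon> h)))" .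
  qed
  finally show ?thesis .
qed

definition Ed :: "nat \<Rightarrow> (nat \<Rightarrow> nat) \<Rightarrow> nat set" where "Ed v e = {h. h < 3*v \<and> h < e h}"

lemma finite_Ed[simp]: "finite (Ed v e)" by (simp add: Ed_def)

lemma otgD: assumes "otg v e" "h < 3*v" shows "e h < 3*v" "e h \<noteq> h" "e (e h) = h"
  using assms by (auto simp: otg_def)

lemma Ed_props:
  assumes "otg v e"
  shows "{..<3*v} = Ed v e \<union> e ` Ed v e" "Ed v e \<inter> e ` Ed v e = {}" "inj_on e (Ed v e)"
    "h \<in> Ed v e \<Longrightarrow> e h \<notin> Ed v e" "h < 3*v \<Longrightarrow> h \<notin> Ed v e \<Longrightarrow> e h \<in> Ed v e"
    "h \<in> Ed v e \<Longrightarrow> h < 3*v" "h \<in> Ed v e \<Longrightarrow> e h < 3*v"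
proof -
  note o = otgD[OF assms]
  show 5: "e h \<in> Ed v e" if "h < 3*v" "h \<notin> Ed v e" for h
    using that o[of h] by (auto simp: Ed_def)
  show "{..<3*v} = Ed v e \<union> e ` Ed v e"
  proof
    show "{..<3*v} \<subseteq> Ed v e \<union> e ` Ed v e"
    proof
      fix h assume h: "h \<in> {..<3*v}"
      show "h \<in> Ed v e \<union> e ` Ed v e"
      proof (cases "h \<in> Ed v e")
        case False
        hence "e h \<in> Ed v e" using 5 h by auto
        moreover have "h = e (e h)" using o(3) h by auto
        ultimately show ?thesis by blast
      qed simp
    qed
  next
    show "Ed v e \<union> e ` Ed v e \<subseteq> {..<3*v}" using o by (auto simp: Ed_def)
  qed
  show "Ed v e \<inter> e ` Ed v e = {}" using o by (auto simp: Ed_def)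
  show "inj_on e (Ed v e)" using o by (intro inj_onI) (metis Ed_def mem_Collect_eq)
  show "h \<in> Ed v e \<Longrightarrow> e h \<notin> Ed v e" using o[of h] by (auto simp: Ed_def)
  show "h \<in> Ed v e \<Longrightarrow> h < 3*v" by (auto simp: Ed_def)
  show "h \<in> Ed v e \<Longrightarrow> e h < 3*v" using o[of h] by (auto simp: Ed_def)
qed

lemma edge_prod:
  fixes f :: "nat \<Rightarrow> 'a::comm_monoid_mult"
  assumes "otg v e"
  shows "(\<Prod>h<3*v. f h) = (\<Prod>h\<in>Ed v e. f h * f (e h))"
proof -
  note P = Ed_props[OF assms]
  have "(\<Prod>h<3*v. f h) = (\<Prod>h\<in>Ed v e. f h) * (\<Prod>h\<in>e ` Ed v e. f h)"
    unfolding P(1) by (rule prod.union_disjoint) (use P(2) in auto)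
  also have "(\<Prod>h\<in>e ` Ed v e. f h) = (\<Prod>h\<in>Ed v e. f (e h))"
    by (rule prod.reindex[OF P(3), unfolded comp_def])
  finally show ?thesis by (simp add: prod.distrib)
qed

lemma pair_sum:
  fixes w :: "nat \<Rightarrow> 'b \<Rightarrow> 'b \<Rightarrow> 'a::comm_semiring_1"
  assumes o: "otg v e" and A: "finite A"
  shows "(\<Sum>\<sigma>\<in>PiE {..<3*v} (\<lambda>_. A). \<Prod>h\<in>Ed v e. w h (\<sigma> h) (\<sigma> (e h)))
       = (\<Prod>h\<in>Ed v e. \<Sum>a\<in>A. \<Sum>b\<in>A. w h a b)"
proof -
  note P = Ed_props[OF o]
  let ?H = "{..<3*v}" and ?E = "Ed v e"
  define \<pi> where "\<pi> = (\<lambda>\<sigma>::nat\<Rightarrow>'b. restrict (\<lambda>h. (\<sigma> h, \<sigma> (e h))) ?E)"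
  define \<gamma> where "\<gamma> = (\<lambda>\<tau>::nat\<Rightarrow>'b\<times>'b. restrict (\<lambda>h. if h \<in> ?E then fst (\<tau> h) else snd (\<tau> (e h))) ?H)"
  have bij: "bij_betw \<pi> (PiE ?H (\<lambda>_. A)) (PiE ?E (\<lambda>_. A \<times> A))"
  proof (rule bij_betwI[where g = \<gamma>])
    show "\<pi> \<in> PiE ?H (\<lambda>_. A) \<rightarrow> PiE ?E (\<lambda>_. A \<times> A)"
      using P(6,7) by (auto simp: \<pi>_def PiE_def Pi_def)
    show "\<gamma> \<in> PiE ?E (\<lambda>_. A \<times> A) \<rightarrow> PiE ?H (\<lambda>_. A)"
    proof
      fix \<tau> assume t: "\<tau> \<in> PiE ?E (\<lambda>_. A \<times> A)"
      show "\<gamma> \<tau> \<in> PiE ?H (\<lambda>_. A)"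
        unfolding \<gamma>_def
      proof (rule restrict_PiE_iff[THEN iffD2], intro ballI)
        fix h assume h: "h \<in> ?H"
        show "(if h \<in> ?E then fst (\<tau> h) else snd (\<tau> (e h))) \<in> A"
        proof (cases "h \<in> ?E")
          case True thus ?thesis using t by (auto simp: PiE_def Pi_def)
        next
          case False
          hence "e h \<in> ?E" using P(5) h by auto
          thus ?thesis using t False by (auto simp: PiE_def Pi_def)
        qed
      qed
    qed
    fix \<sigma> assume s: "\<sigma> \<in> PiE ?H (\<lambda>_. A)"
    show "\<gamma> (\<pi> \<sigma>) = \<sigma>"
    proof
      fix h show "\<gamma> (\<pi> \<sigma>) h = \<sigma> h"
      proof (cases "h \<in> ?H")
        case True
        show ?thesis
        proof (cases "h \<in> ?E")
          case True thus ?thesis using \<open>h \<in> ?H\<close> by (simp add: \<gamma>_def \<pi>_def)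
        next
          case False
          hence "e h \<in> ?E" using P(5) \<open>h \<in> ?H\<close> by auto
          thus ?thesis using False \<open>h \<in> ?H\<close> otgD(3)[OF o, of h] by (simp add: \<gamma>_def \<pi>_def)
        qed
      next
        case False thus ?thesis using s by (simp add: \<gamma>_def PiE_def extensional_def)
      qed
    qed
  next
    fix \<tau> assume t: "\<tau> \<in> PiE ?E (\<lambda>_. A \<times> A)"
    show "\<pi> (\<gamma> \<tau>) = \<tau>"
    proof
      fix h show "\<pi> (\<gamma> \<tau>) h = \<tau> h"
      proof (cases "h \<in> ?E")
        case True
        hence "e h \<notin> ?E" "e h \<in> ?H" "h \<in> ?H" using P(4,6,7) by auto
        thus ?thesis using True otgD(3)[OF o, of h] by (simp add: \<gamma>_def \<pi>_def)
      next
        case False thus ?thesis using t by (simp add: \<pi>_def PiE_def extensional_def)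
      qed
    qed
  qed
  define g where "g = (\<lambda>\<tau>. \<Prod>h\<in>?E. w h (fst (\<tau> h)) (snd (\<tau> h)))"
  have "(\<Sum>\<sigma>\<in>PiE ?H (\<lambda>_. A). \<Prod>h\<in>?E. w h (\<sigma> h) (\<sigma> (e h))) = (\<Sum>\<sigma>\<in>PiE ?H (\<lambda>_. A). g (\<pi> \<sigma>))"
    by (intro sum.cong refl prod.cong) (simp_all add: g_def \<pi>_def)
  also have "\<dots> = (\<Sum>\<tau>\<in>PiE ?E (\<lambda>_. A \<times> A). g \<tau>)" by (rule sum.reindex_bij_betw[OF bij])
  also have "\<dots> = (\<Prod>h\<in>?E. \<Sum>p\<in>A \<times> A. w h (fst p) (snd p))"
    unfolding g_def by (rule prod_sum_PiE[symmetric]) (use A in auto)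
  also have "\<dots> = (\<Prod>h\<in>?E. \<Sum>a\<in>A. \<Sum>b\<in>A. w h a b)"
    by (simp add: sum.cartesian_product case_prod_beta)
  finally show ?thesis .
qed

definition Pw :: "nat \<Rightarrow> (nat \<Rightarrow> nat \<Rightarrow> complex) list \<Rightarrow> nat \<Rightarrow> nat \<Rightarrow> nat \<Rightarrow> nat \<Rightarrow> complex" where
  "Pw N B i j k l = (\<Sum>a<length B. \<Sum>b<length B. tinv N B a b * (B!a) i j * (B!b) k l)"

lemma W_inner:
  assumes o: "otg v e"
  shows "(\<Sum>\<sigma>\<in>PiE {..<3*v} (\<lambda>_. {..<length B}).
      (\<Prod>h<3*v. (B!(\<sigma> h)) (Xf y h) (Xf y (rho \<epsilon> h))) * (\<Prod>h\<in>Ed v e. tinv N B (\<sigma> h) (\<sigma> (e h))))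
    = (\<Prod>h\<in>Ed v e. Pw N B (Xf y h) (Xf y (rho \<epsilon> h)) (Xf y (e h)) (Xf y (rho \<epsilon> (e h))))"
proof -
  define g where "g = (\<lambda>h a. (B!a) (Xf y h) (Xf y (rho \<epsilon> h)))"
  have "(\<Sum>\<sigma>\<in>PiE {..<3*v} (\<lambda>_. {..<length B}).
      (\<Prod>h<3*v. (B!(\<sigma> h)) (Xf y h) (Xf y (rho \<epsilon> h))) * (\<Prod>h\<in>Ed v e. tinv N B (\<sigma> h) (\<sigma> (e h))))
    = (\<Sum>\<sigma>\<in>PiE {..<3*v} (\<lambda>_. {..<length B}).
      \<Prod>h\<in>Ed v e. g h (\<sigma> h) * g (e h) (\<sigma> (e h)) * tinv N B (\<sigma> h) (\<sigma> (e h)))"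
  proof (rule sum.cong[OF refl])
    fix \<sigma>
    have "(\<Prod>h<3*v. (B!(\<sigma> h)) (Xf y h) (Xf y (rho \<epsilon> h))) = (\<Prod>h<3*v. g h (\<sigma> h))"
      by (simp add: g_def)
    also have "\<dots> = (\<Prod>h\<in>Ed v e. g h (\<sigma> h) * g (e h) (\<sigma> (e h)))" by (rule edge_prod[OF o])
    finally show "(\<Prod>h<3*v. (B!(\<sigma> h)) (Xf y h) (Xf y (rho \<epsilon> h))) * (\<Prod>h\<in>Ed v e. tinv N B (\<sigma> h) (\<sigma> (e h)))
      = (\<Prod>h\<in>Ed v e. g h (\<sigma> h) * g (e h) (\<sigma> (e h)) * tinv N B (\<sigma> h) (\<sigma> (e h)))"
      by (simp add: prod.distrib)
  qed
  also have "\<dots> = (\<Prod>h\<in>Ed v e. \<Sum>a<length B. \<Sum>b<length B. g h a * g (e h) b * tinv N B a b)"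
    by (rule pair_sum[OF o]) simp
  also have "\<dots> = (\<Prod>h\<in>Ed v e. Pw N B (Xf y h) (Xf y (rho \<epsilon> h)) (Xf y (e h)) (Xf y (rho \<epsilon> (e h))))"
    unfolding Pw_def g_def by (intro prod.cong refl sum.cong) (simp add: mult_ac)
  finally show ?thesis .
qed

lemma W1:
  assumes o: "otg v e"
  shows "W_sl N B v e = (\<Sum>\<epsilon>\<in>EPS v. sgnp \<epsilon> v * (\<Sum>y\<in>YS N v.
     \<Prod>h\<in>Ed v e. Pw N B (Xf y h) (Xf y (rho \<epsilon> h)) (Xf y (e h)) (Xf y (rho \<epsilon> (e h)))))"
proof -
  let ?PS = "PiE {..<3*v} (\<lambda>_. {..<length B})"
  define Q where "Q = (\<lambda>\<sigma> \<epsilon> y. \<Prod>h<3*v. (B!(\<sigma> h)) (Xf y h) (Xf y (rho \<epsilon> h)))"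
  define S where "S = (\<lambda>\<sigma>. \<Prod>h\<in>Ed v e. tinv N B (\<sigma> h) (\<sigma> (e h)))"
  have e1: "{0..<3*v} = {..<3*v}" "{0..<length B} = {..<length B}" by auto
  have e2: "{h. h < 3*v \<and> h < e h} = Ed v e" by (simp add: Ed_def)
  have "W_sl N B v e = (\<Sum>\<sigma>\<in>?PS. G N (\<lambda>h. B ! (\<sigma> h)) v * S \<sigma>)"
    unfolding W_sl_def e1 e2 S_def G_def fstr_def F3_def ..
  also have "\<dots> = (\<Sum>\<sigma>\<in>?PS. \<Sum>\<epsilon>\<in>EPS v. \<Sum>y\<in>YS N v. sgnp \<epsilon> v * (Q \<sigma> \<epsilon> y * S \<sigma>))"
    unfolding G_expand Q_def by (simp add: sum_distrib_right sum_distrib_left mult.assoc)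
  also have "\<dots> = (\<Sum>\<epsilon>\<in>EPS v. \<Sum>\<sigma>\<in>?PS. \<Sum>y\<in>YS N v. sgnp \<epsilon> v * (Q \<sigma> \<epsilon> y * S \<sigma>))"
    by (rule sum.swap)
  also have "\<dots> = (\<Sum>\<epsilon>\<in>EPS v. \<Sum>y\<in>YS N v. \<Sum>\<sigma>\<in>?PS. sgnp \<epsilon> v * (Q \<sigma> \<epsilon> y * S \<sigma>))"
    by (rule sum.cong[OF refl], rule sum.swap)
  also have "\<dots> = (\<Sum>\<epsilon>\<in>EPS v. sgnp \<epsilon> v * (\<Sum>y\<in>YS N v. \<Sum>\<sigma>\<in>?PS. Q \<sigma> \<epsilon> y * S \<sigma>))"
    by (simp add: sum_distrib_left)
  also have "\<dots> = (\<Sum>\<epsilon>\<in>EPS v. sgnp \<epsilon> v * (\<Sum>y\<in>YS N v.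
     \<Prod>h\<in>Ed v e. Pw N B (Xf y h) (Xf y (rho \<epsilon> h)) (Xf y (e h)) (Xf y (rho \<epsilon> (e h)))))"
    unfolding Q_def S_def W_inner[OF o] ..
  finally show ?thesis .
qed

definition shiftI :: "nat \<Rightarrow> (nat \<Rightarrow> nat \<Rightarrow> complex) \<Rightarrow> (nat \<Rightarrow> nat \<Rightarrow> complex) \<Rightarrow> bool" where
  "shiftI N A' A \<longleftrightarrow> (\<exists>\<alpha>. \<forall>i<N. \<forall>j<N. A' i j = A i j + \<alpha> * (if i = j then 1 else 0))"

lemma delta_sum1: "y < (N::nat) \<Longrightarrow> (\<Sum>z<N. (if y = z then 1 else 0) * (C z x :: complex)) = C y x"
proof -
  assume "y < N"
  have "(\<Sum>z<N. (if y = z then 1 else 0) * (C z x :: complex)) = (\<Sum>z<N. if z = y then C z x else 0)"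
    by (intro sum.cong) auto
  also have "\<dots> = C y x" using \<open>y < N\<close> by (subst sum.delta) auto
  finally show ?thesis .
qed
lemma delta_sum2: "x < (N::nat) \<Longrightarrow> (\<Sum>z<N. (C y z :: complex) * (if z = x then 1 else 0)) = C y x"
proof -
  assume "x < N"
  have "(\<Sum>z<N. (C y z :: complex) * (if z = x then 1 else 0)) = (\<Sum>z<N. if z = x then C y z else 0)"
    by (intro sum.cong) auto
  also have "\<dots> = C y x" using \<open>x < N\<close> by (subst sum.delta) auto
  finally show ?thesis .
qed

lemma F3_inv2:
  assumes "shiftI N B' B" shows "F3 N A B' C = F3 N A B C"
proof -
  obtain \<beta> where b: "\<forall>i<N. \<forall>j<N. B' i j = B i j + \<beta> * (if i = j then 1 else 0)"
    using assms by (auto simp: shiftI_def)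
  have "(\<Sum>z<N. B' y z * C z x - C y z * B' z x) = (\<Sum>z<N. B y z * C z x - C y z * B z x)"
    if xy: "x < N" "y < N" for x y
  proof -
    have "(\<Sum>z<N. B' y z * C z x - C y z * B' z x) = (\<Sum>z<N. (B y z * C z x - C y z * B z x)
       + \<beta> * ((if y = z then 1 else 0) * C z x - C y z * (if z = x then 1 else 0)))"
      using b xy by (intro sum.cong refl) (simp add: algebra_simps)
    also have "\<dots> = (\<Sum>z<N. B y z * C z x - C y z * B z x)
       + \<beta> * ((\<Sum>z<N. (if y = z then 1 else 0) * C z x) - (\<Sum>z<N. C y z * (if z = x then 1 else 0)))"
      by (simp only: sum.distrib sum_distrib_left sum_subtractf right_diff_distrib)
    also have "\<dots> = (\<Sum>z<N. B y z * C z x - C y z * B z x)"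
      using xy by (simp only: delta_sum1 delta_sum2) simp
    finally show ?thesis .
  qed
  thus ?thesis unfolding F3_explicit by (intro sum.cong refl) simp
qed

lemma F3_inv3:
  assumes "shiftI N C' C" shows "F3 N A B C' = F3 N A B C"
proof -
  obtain \<gamma> where c: "\<forall>i<N. \<forall>j<N. C' i j = C i j + \<gamma> * (if i = j then 1 else 0)"
    using assms by (auto simp: shiftI_def)
  have "(\<Sum>z<N. B y z * C' z x - C' y z * B z x) = (\<Sum>z<N. B y z * C z x - C y z * B z x)"
    if xy: "x < N" "y < N" for x y
  proof -
    have "(\<Sum>z<N. B y z * C' z x - C' y z * B z x) = (\<Sum>z<N. (B y z * C z x - C y z * B z x)
       + \<gamma> * (B y z * (if z = x then 1 else 0) - (if y = z then 1 else 0) * B z x))"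
      using c xy by (intro sum.cong refl) (simp add: algebra_simps)
    also have "\<dots> = (\<Sum>z<N. B y z * C z x - C y z * B z x)
       + \<gamma> * ((\<Sum>z<N. B y z * (if z = x then 1 else 0)) - (\<Sum>z<N. (if y = z then 1 else 0) * B z x))"
      by (simp only: sum.distrib sum_distrib_left sum_subtractf right_diff_distrib)
    also have "\<dots> = (\<Sum>z<N. B y z * C z x - C y z * B z x)"
      using xy by (simp only: delta_sum1 delta_sum2) simp
    finally show ?thesis .
  qed
  thus ?thesis unfolding F3_explicit by (intro sum.cong refl) simp
qed

lemma F3_inv1:
  assumes "shiftI N A' A" shows "F3 N A' B C = F3 N A B C"
proof -
  obtain \<alpha> where a: "\<forall>i<N. \<forall>j<N. A' i j = A i j + \<alpha> * (if i = j then 1 else 0)"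
    using assms by (auto simp: shiftI_def)
  define K where "K = (\<lambda>y x. \<Sum>z<N. B y z * C z x - C y z * B z x)"
  have trK: "(\<Sum>x<N. K x x) = 0"
  proof -
    have "(\<Sum>x<N. K x x) = (\<Sum>x<N. \<Sum>z<N. B x z * C z x) - (\<Sum>x<N. \<Sum>z<N. C x z * B z x)"
      unfolding K_def by (simp only: sum_subtractf)
    also have "(\<Sum>x<N. \<Sum>z<N. C x z * B z x) = (\<Sum>z<N. \<Sum>x<N. C x z * B z x)" by (rule sum.swap)
    also have "\<dots> = (\<Sum>x<N. \<Sum>z<N. B x z * C z x)" by (simp add: mult.commute)
    finally show ?thesis by simp
  qed
  have "F3 N A' B C = (\<Sum>x<N. \<Sum>y<N. A' x y * K y x)" unfolding F3_explicit K_def ..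
  also have "\<dots> = (\<Sum>x<N. \<Sum>y<N. A x y * K y x + \<alpha> * ((if x = y then 1 else 0) * K y x))"
    using a by (intro sum.cong refl) (simp add: algebra_simps)
  also have "\<dots> = (\<Sum>x<N. \<Sum>y<N. A x y * K y x) + \<alpha> * (\<Sum>x<N. \<Sum>y<N. (if x = y then 1 else 0) * K y x)"
    by (simp only: sum.distrib sum_distrib_left)
  also have "(\<Sum>x<N. \<Sum>y<N. (if x = y then 1 else 0) * K y x) = (\<Sum>x<N. K x x)"
    by (rule sum.cong[OF refl]) (rule delta_sum1, simp)
  also have "(\<Sum>x<N. \<Sum>y<N. A x y * K y x) = F3 N A B C" unfolding F3_explicit K_def ..
  finally show ?thesis using trK by simp
qed

lemma F3_inv:
  assumes "shiftI N A' A" "shiftI N B' B" "shiftI N C' C"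
  shows "F3 N A' B' C' = F3 N A B C"
  using F3_inv1[OF assms(1)] F3_inv2[OF assms(2)] F3_inv3[OF assms(3)] by simp

definition Em :: "nat \<times> nat \<Rightarrow> nat \<Rightarrow> nat \<Rightarrow> complex" where
  "Em \<kappa> i j = (if i = fst \<kappa> \<and> j = snd \<kappa> then 1 else 0)"
definition Al :: "complex \<Rightarrow> nat \<times> nat \<Rightarrow> nat \<Rightarrow> nat \<Rightarrow> complex" where
  "Al lam \<kappa> i j = Em \<kappa> i j - lam * (if fst \<kappa> = snd \<kappa> \<and> i = j then 1 else 0)"
definition swp :: "nat \<times> nat \<Rightarrow> nat \<times> nat" where "swp \<kappa> = (snd \<kappa>, fst \<kappa>)"
definition Pl :: "complex \<Rightarrow> nat \<Rightarrow> nat \<Rightarrow> nat \<Rightarrow> nat \<Rightarrow> complex" where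
  "Pl lam i j k l = (if j = k \<and> i = l then 1 else 0) - lam * (if i = j \<and> k = l then 1 else 0)"
definition KK :: "nat \<Rightarrow> (nat \<times> nat) set" where "KK N = {..<N} \<times> {..<N}"
definition Mt :: "nat \<Rightarrow> (nat \<Rightarrow> nat) \<Rightarrow> complex \<Rightarrow> (nat \<Rightarrow> nat \<times> nat) \<Rightarrow> nat \<Rightarrow> nat \<Rightarrow> nat \<Rightarrow> complex" where
  "Mt v e lam \<tau> h = (if h \<in> Ed v e then Al lam (\<tau> h) else Em (swp (\<tau> (e h))))"
definition Psi :: "nat \<Rightarrow> nat \<Rightarrow> (nat \<Rightarrow> nat) \<Rightarrow> complex \<Rightarrow> complex" where
  "Psi N v e lam = (\<Sum>\<epsilon>\<in>EPS v. sgnp \<epsilon> v * (\<Sum>y\<in>YS N v.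
     \<Prod>h\<in>Ed v e. Pl lam (Xf y h) (Xf y (rho \<epsilon> h)) (Xf y (e h)) (Xf y (rho \<epsilon> (e h)))))"

lemma finite_KK[simp]: "finite (KK N)" by (simp add: KK_def)

lemma Xf_lt: assumes "y \<in> YS N v" "h < 3*v" shows "Xf y h < N"
proof -
  have "h div 3 < v" using assms(2) by simp
  hence "y (h div 3) \<in> T3 N" using assms(1) by (auto simp: YS_def PiE_def Pi_def)
  thus ?thesis by (auto simp: Xf_def comp3_def T3_def)
qed

lemma rho_lt: assumes "h < 3*v" shows "rho \<epsilon> h < 3*v"
proof -
  have "h div 3 < v" using assms by simp
  hence "3 * (h div 3) + 3 \<le> 3 * v" by simp
  moreover have "rot (\<epsilon> (h div 3)) (h mod 3) < 3" by (rule rot_lt)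
  ultimately show ?thesis by (simp add: rho_def)
qed

lemma Pl_decomp:
  assumes "i < N" "j < N" "k < N" "l < N"
  shows "Pl lam i j k l = (\<Sum>\<kappa>\<in>KK N. Al lam \<kappa> i j * Em (swp \<kappa>) k l)"
proof -
  have "(\<Sum>\<kappa>\<in>KK N. Al lam \<kappa> i j * Em (swp \<kappa>) k l)
     = (\<Sum>\<kappa>\<in>KK N. (if \<kappa> = (i, j) then (if j = k \<and> i = l then 1 else 0) else 0)
          - lam * (if \<kappa> = (k, k) then (if i = j \<and> k = l then 1 else 0) else 0))"
    by (intro sum.cong refl) (auto simp: Al_def Em_def swp_def)
  also have "\<dots> = (\<Sum>\<kappa>\<in>KK N. (if \<kappa> = (i, j) then (if j = k \<and> i = l then 1 else 0) else 0))
          - lam * (\<Sum>\<kappa>\<in>KK N. (if \<kappa> = (k, k) then (if i = j \<and> k = l then 1 else 0) else 0))"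
    by (simp only: sum_subtractf sum_distrib_left)
  also have "\<dots> = Pl lam i j k l"
    using assms by (simp only: sum.delta finite_KK) (simp add: KK_def Pl_def)
  finally show ?thesis ..
qed

lemma C1:
  assumes o: "otg v e"
  shows "Psi N v e lam = (\<Sum>\<tau>\<in>PiE (Ed v e) (\<lambda>_. KK N). G N (Mt v e lam \<tau>) v)"
proof -
  note P = Ed_props[OF o]
  let ?TT = "PiE (Ed v e) (\<lambda>_. KK N)"
  have inner: "(\<Prod>h\<in>Ed v e. Pl lam (Xf y h) (Xf y (rho \<epsilon> h)) (Xf y (e h)) (Xf y (rho \<epsilon> (e h))))
     = (\<Sum>\<tau>\<in>?TT. \<Prod>h<3*v. Mt v e lam \<tau> h (Xf y h) (Xf y (rho \<epsilon> h)))"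
    if y: "y \<in> YS N v" for y \<epsilon>
  proof -
    have "(\<Prod>h\<in>Ed v e. Pl lam (Xf y h) (Xf y (rho \<epsilon> h)) (Xf y (e h)) (Xf y (rho \<epsilon> (e h))))
       = (\<Prod>h\<in>Ed v e. \<Sum>\<kappa>\<in>KK N. Al lam \<kappa> (Xf y h) (Xf y (rho \<epsilon> h)) * Em (swp \<kappa>) (Xf y (e h)) (Xf y (rho \<epsilon> (e h))))"
    proof (rule prod.cong[OF refl])
      fix h assume h: "h \<in> Ed v e"
      hence "h < 3*v" "e h < 3*v" using P(6,7) by auto
      thus "Pl lam (Xf y h) (Xf y (rho \<epsilon> h)) (Xf y (e h)) (Xf y (rho \<epsilon> (e h)))
         = (\<Sum>\<kappa>\<in>KK N. Al lam \<kappa> (Xf y h) (Xf y (rho \<epsilon> h)) * Em (swp \<kappa>) (Xf y (e h)) (Xf y (rho \<epsilon> (e h))))"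
        by (intro Pl_decomp Xf_lt[OF y] rho_lt)
    qed
    also have "\<dots> = (\<Sum>\<tau>\<in>?TT. \<Prod>h\<in>Ed v e. Al lam (\<tau> h) (Xf y h) (Xf y (rho \<epsilon> h)) * Em (swp (\<tau> h)) (Xf y (e h)) (Xf y (rho \<epsilon> (e h))))"
      by (rule prod_sum_PiE) auto
    also have "\<dots> = (\<Sum>\<tau>\<in>?TT. \<Prod>h<3*v. Mt v e lam \<tau> h (Xf y h) (Xf y (rho \<epsilon> h)))"
    proof (rule sum.cong[OF refl])
      fix \<tau>
      have "(\<Prod>h<3*v. Mt v e lam \<tau> h (Xf y h) (Xf y (rho \<epsilon> h)))
          = (\<Prod>h\<in>Ed v e. Mt v e lam \<tau> h (Xf y h) (Xf y (rho \<epsilon> h)) * Mt v e lam \<tau> (e h) (Xf y (e h)) (Xf y (rho \<epsilon> (e h))))"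
        by (rule edge_prod[OF o])
      also have "\<dots> = (\<Prod>h\<in>Ed v e. Al lam (\<tau> h) (Xf y h) (Xf y (rho \<epsilon> h)) * Em (swp (\<tau> h)) (Xf y (e h)) (Xf y (rho \<epsilon> (e h))))"
      proof (rule prod.cong[OF refl])
        fix h assume h: "h \<in> Ed v e"
        hence "e h \<notin> Ed v e" "e (e h) = h" using P(4,6) otgD(3)[OF o] by auto
        thus "Mt v e lam \<tau> h (Xf y h) (Xf y (rho \<epsilon> h)) * Mt v e lam \<tau> (e h) (Xf y (e h)) (Xf y (rho \<epsilon> (e h)))
           = Al lam (\<tau> h) (Xf y h) (Xf y (rho \<epsilon> h)) * Em (swp (\<tau> h)) (Xf y (e h)) (Xf y (rho \<epsilon> (e h)))"
          using h by (simp add: Mt_def)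
      qed
      finally show "(\<Prod>h\<in>Ed v e. Al lam (\<tau> h) (Xf y h) (Xf y (rho \<epsilon> h)) * Em (swp (\<tau> h)) (Xf y (e h)) (Xf y (rho \<epsilon> (e h))))
          = (\<Prod>h<3*v. Mt v e lam \<tau> h (Xf y h) (Xf y (rho \<epsilon> h)))" ..
    qed
    finally show ?thesis .
  qed
  have "Psi N v e lam = (\<Sum>\<epsilon>\<in>EPS v. sgnp \<epsilon> v * (\<Sum>y\<in>YS N v. \<Sum>\<tau>\<in>?TT. \<Prod>h<3*v. Mt v e lam \<tau> h (Xf y h) (Xf y (rho \<epsilon> h))))"
    unfolding Psi_def by (intro sum.cong refl arg_cong2[where f = times]) (simp add: inner)
  also have "\<dots> = (\<Sum>\<epsilon>\<in>EPS v. \<Sum>\<tau>\<in>?TT. sgnp \<epsilon> v * (\<Sum>y\<in>YS N v. \<Prod>h<3*v. Mt v e lam \<tau> h (Xf y h) (Xf y (rho \<epsilon> h))))"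
  proof (rule sum.cong[OF refl])
    fix \<epsilon>
    have "(\<Sum>y\<in>YS N v. \<Sum>\<tau>\<in>?TT. \<Prod>h<3*v. Mt v e lam \<tau> h (Xf y h) (Xf y (rho \<epsilon> h)))
       = (\<Sum>\<tau>\<in>?TT. \<Sum>y\<in>YS N v. \<Prod>h<3*v. Mt v e lam \<tau> h (Xf y h) (Xf y (rho \<epsilon> h)))"
      by (rule sum.swap)
    thus "sgnp \<epsilon> v * (\<Sum>y\<in>YS N v. \<Sum>\<tau>\<in>?TT. \<Prod>h<3*v. Mt v e lam \<tau> h (Xf y h) (Xf y (rho \<epsilon> h)))
       = (\<Sum>\<tau>\<in>?TT. sgnp \<epsilon> v * (\<Sum>y\<in>YS N v. \<Prod>h<3*v. Mt v e lam \<tau> h (Xf y h) (Xf y (rho \<epsilon> h))))"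
      by (simp add: sum_distrib_left)
  qed
  also have "\<dots> = (\<Sum>\<tau>\<in>?TT. \<Sum>\<epsilon>\<in>EPS v. sgnp \<epsilon> v * (\<Sum>y\<in>YS N v. \<Prod>h<3*v. Mt v e lam \<tau> h (Xf y h) (Xf y (rho \<epsilon> h))))"
    by (rule sum.swap)
  also have "\<dots> = (\<Sum>\<tau>\<in>?TT. G N (Mt v e lam \<tau>) v)"
    by (simp only: G_expand)
  finally show ?thesis .
qed

lemma G_Mt: "G N (Mt v e lam \<tau>) v = G N (Mt v e 0 \<tau>) v"
proof -
  have sh: "shiftI N (Mt v e lam \<tau> h) (Mt v e 0 \<tau> h)" for h
  proof (cases "h \<in> Ed v e")
    case True
    show ?thesis unfolding shiftI_def
      by (rule exI[of _ "- lam * (if fst (\<tau> h) = snd (\<tau> h) then 1 else 0)"]) (auto simp: Mt_def Al_def True)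
  next
    case False
    show ?thesis unfolding shiftI_def by (rule exI[of _ 0]) (simp add: Mt_def False)
  qed
  show ?thesis unfolding G_def by (intro prod.cong refl F3_inv sh)
qed

lemma cancel: assumes "otg v e" shows "Psi N v e lam = Psi N v e 0"
  unfolding C1[OF assms] G_Mt[of N v e lam] ..

definition cstep :: "'a set \<Rightarrow> ('a \<Rightarrow> 'a) \<Rightarrow> ('a \<times> 'a) set" where
  "cstep H \<phi> = {(a, \<phi> a) | a. a \<in> H} \<union> {(\<phi> a, a) | a. a \<in> H}"
definition crel :: "'a set \<Rightarrow> ('a \<Rightarrow> 'a) \<Rightarrow> ('a \<times> 'a) set" where
  "crel H \<phi> = (H \<times> H) \<inter> (cstep H \<phi>)\<^sup>*"

lemma crel_equiv: "equiv H (crel H \<phi>)"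
proof (rule equivI)
  show "refl_on H (crel H \<phi>)" by (auto simp: refl_on_def crel_def)
  have "sym (cstep H \<phi>)" by (auto simp: sym_def cstep_def)
  hence "sym ((cstep H \<phi>)\<^sup>*)" by (rule sym_rtrancl)
  thus "sym (crel H \<phi>)" unfolding crel_def sym_def by blast
  show "trans (crel H \<phi>)" unfolding crel_def trans_def by (auto intro: rtrancl_trans)
qed (auto simp: crel_def)

lemma crel_sub: "crel H \<phi> \<subseteq> H \<times> H" by (auto simp: crel_def)

lemma inv_const:
  assumes x: "\<forall>h\<in>H. x h = x (\<phi> h)" and ab: "(a, b) \<in> (cstep H \<phi>)\<^sup>*"
  shows "x a = x b"
  using ab
proof (induction rule: rtrancl_induct)
  case base thus ?case ..
next
  case (step b c)
  hence "x b = x c" using x by (auto simp: cstep_def)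
  thus ?case using step by simp
qed

lemma count_inv:
  fixes H :: "'a set" and S :: "'b set" and \<phi> :: "'a \<Rightarrow> 'a"
  assumes H: "finite H" and \<phi>: "\<forall>h\<in>H. \<phi> h \<in> H" and S: "finite S"
  shows "card {x \<in> PiE H (\<lambda>_. S). \<forall>h\<in>H. x h = x (\<phi> h)} = card S ^ card (H // crel H \<phi>)"
proof -
  let ?R = "crel H \<phi>"
  let ?I = "{x \<in> PiE H (\<lambda>_. S). \<forall>h\<in>H. x h = x (\<phi> h)}"
  have eqv: "equiv H ?R" by (rule crel_equiv)
  define \<Phi> where "\<Phi> = (\<lambda>c::'a set \<Rightarrow> 'b. restrict (\<lambda>h. c (?R `` {h})) H)"
  define \<Gamma> where "\<Gamma> = (\<lambda>x::'a \<Rightarrow> 'b. restrict (\<lambda>C. x (SOME h. h \<in> C)) (H // ?R))"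
  have Rsub: "?R \<subseteq> (cstep H \<phi>)\<^sup>*" by (auto simp: crel_def)
  have mem: "(SOME h. h \<in> C) \<in> C" "C \<subseteq> H" if CH: "C \<in> H // ?R" for C
  proof -
    obtain a where a: "a \<in> H" "C = ?R `` {a}" using CH unfolding quotient_def by blast
    hence "a \<in> C" using eqv by (auto simp: equiv_def refl_on_def)
    thus "(SOME h. h \<in> C) \<in> C" by (rule someI)
    show "C \<subseteq> H" using a by (auto simp: crel_def)
  qed
  have cls: "?R `` {h'} = C" if CH: "C \<in> H // ?R" "h' \<in> C" for C h'
  proof -
    obtain a where a: "a \<in> H" "C = ?R `` {a}" using CH(1) unfolding quotient_def by blast
    hence "(a, h') \<in> ?R" using CH(2) by auto
    thus ?thesis using a eqv equiv_class_eq by metis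
  qed
  have bij: "bij_betw \<Phi> (PiE (H // ?R) (\<lambda>_. S)) ?I"
  proof (rule bij_betwI[where g = \<Gamma>])
    show "\<Phi> \<in> PiE (H // ?R) (\<lambda>_. S) \<rightarrow> ?I"
    proof
      fix c assume c: "c \<in> PiE (H // ?R) (\<lambda>_. S)"
      have "\<Phi> c \<in> PiE H (\<lambda>_. S)" unfolding \<Phi>_def
        using c by (auto simp: PiE_def Pi_def intro: quotientI)
      moreover have "\<Phi> c h = \<Phi> c (\<phi> h)" if h: "h \<in> H" for h
      proof -
        have "(h, \<phi> h) \<in> ?R" using h \<phi> by (auto simp: crel_def cstep_def)
        hence "?R `` {h} = ?R `` {\<phi> h}" using eqv equiv_class_eq by metis
        thus ?thesis using h \<phi> by (simp add: \<Phi>_def)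
      qed
      ultimately show "\<Phi> c \<in> ?I" by auto
    qed
    show "\<Gamma> \<in> ?I \<rightarrow> PiE (H // ?R) (\<lambda>_. S)"
    proof
      fix x assume x: "x \<in> ?I"
      show "\<Gamma> x \<in> PiE (H // ?R) (\<lambda>_. S)" unfolding \<Gamma>_def
        using x mem by (auto simp: PiE_def Pi_def)
    qed
    fix c assume c: "c \<in> PiE (H // ?R) (\<lambda>_. S)"
    show "\<Gamma> (\<Phi> c) = c"
    proof
      fix C show "\<Gamma> (\<Phi> c) C = c C"
      proof (cases "C \<in> H // ?R")
        case True
        thus ?thesis using mem[OF True] cls[OF True] by (auto simp: \<Gamma>_def \<Phi>_def)
      next
        case False thus ?thesis using c by (simp add: \<Gamma>_def PiE_def extensional_def)
      qed
    qed
  next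
    fix x assume x: "x \<in> ?I"
    show "\<Phi> (\<Gamma> x) = x"
    proof
      fix h show "\<Phi> (\<Gamma> x) h = x h"
      proof (cases "h \<in> H")
        case True
        have q: "?R `` {h} \<in> H // ?R" using True by (rule quotientI)
        let ?h' = "SOME h'. h' \<in> ?R `` {h}"
        have "?h' \<in> ?R `` {h}" using mem[OF q] by simp
        hence "(h, ?h') \<in> (cstep H \<phi>)\<^sup>*" using Rsub by auto
        hence "x h = x ?h'" using x by (intro inv_const[of H x \<phi>]) auto
        thus ?thesis using True q by (simp add: \<Phi>_def \<Gamma>_def)
      next
        case False thus ?thesis using x by (simp add: \<Phi>_def PiE_def extensional_def)
      qed
    qed
  qed
  have "card ?I = card (PiE (H // ?R) (\<lambda>_. S))" using bij_betw_same_card[OF bij] by simp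
  also have "\<dots> = card S ^ card (H // ?R)"
    using H by (simp add: card_PiE finite_quotient[OF H crel_sub])
  finally show ?thesis .
qed

definition Fc :: "nat \<Rightarrow> (nat \<Rightarrow> nat) \<Rightarrow> (nat \<Rightarrow> bool) \<Rightarrow> nat" where
  "Fc v e \<epsilon> = card ({..<3*v} // crel {..<3*v} (\<lambda>h. rho \<epsilon> (e h)))"

lemma prod_ind: "finite S \<Longrightarrow> (\<Prod>h\<in>S. (if P h then 1 else (0::complex))) = (if \<forall>h\<in>S. P h then 1 else 0)"
  by (induction S rule: finite_induct) auto

lemma sum_ind: "finite A \<Longrightarrow> (\<Sum>y\<in>A. (if P y then 1 else (0::complex))) = of_nat (card {y\<in>A. P y})"
proof -
  assume A: "finite A"
  have "(\<Sum>y\<in>A. (if P y then 1 else (0::complex))) = (\<Sum>y\<in>{y\<in>A. P y}. 1)"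
    using A by (simp only: sum.inter_filter)
  thus ?thesis by simp
qed

lemma Xf_restrict_bij:
  "bij_betw (\<lambda>y. restrict (Xf y) {..<3*v}) (YS N v) (PiE {..<3*v} (\<lambda>_. {..<N}))"
proof (rule bij_betwI[where g = "\<lambda>x. restrict (\<lambda>i. (x (3*i), x (3*i+1), x (3*i+2))) {..<v}"])
  show "(\<lambda>y. restrict (Xf y) {..<3*v}) \<in> YS N v \<rightarrow> PiE {..<3*v} (\<lambda>_. {..<N})"
    using Xf_lt by auto
  show "(\<lambda>x. restrict (\<lambda>i. (x (3*i), x (3*i+1), x (3*i+2))) {..<v}) \<in> PiE {..<3*v} (\<lambda>_. {..<N}) \<rightarrow> YS N v"
  proof
    fix x assume x: "x \<in> PiE {..<3*v} (\<lambda>_. {..<N})"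
    have "x (3*i) < N \<and> x (3*i+1) < N \<and> x (3*i+2) < N" if "i < v" for i
      using x that by (auto simp: PiE_def Pi_def)
    thus "restrict (\<lambda>i. (x (3*i), x (3*i+1), x (3*i+2))) {..<v} \<in> YS N v"
      by (auto simp: YS_def T3_def)
  qed
next
  fix y assume y: "y \<in> YS N v"
  show "restrict (\<lambda>i. (restrict (Xf y) {..<3*v} (3*i), restrict (Xf y) {..<3*v} (3*i+1), restrict (Xf y) {..<3*v} (3*i+2))) {..<v} = y"
  proof
    fix i show "restrict (\<lambda>i. (restrict (Xf y) {..<3*v} (3*i), restrict (Xf y) {..<3*v} (3*i+1), restrict (Xf y) {..<3*v} (3*i+2))) {..<v} i = y i"
    proof (cases "i < v")
      case True
      have "Xf y (3*i) = comp3 (y i) 0" "Xf y (3*i+1) = comp3 (y i) 1" "Xf y (3*i+2) = comp3 (y i) 2"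
        using Xf_3i[of 0 y i] Xf_3i[of 1 y i] Xf_3i[of 2 y i] by simp_all
      thus ?thesis using True by (simp add: comp3_def)
    next
      case False thus ?thesis using y by (simp add: YS_def PiE_def extensional_def)
    qed
  qed
next
  fix x assume x: "x \<in> PiE {..<3*v} (\<lambda>_. {..<N})"
  show "restrict (Xf (restrict (\<lambda>i. (x (3*i), x (3*i+1), x (3*i+2))) {..<v})) {..<3*v} = x"
  proof
    fix h show "restrict (Xf (restrict (\<lambda>i. (x (3*i), x (3*i+1), x (3*i+2))) {..<v})) {..<3*v} h = x h"
    proof (cases "h < 3*v")
      case True
      hence d: "h div 3 < v" by simp
      define q where "q = h div 3"
      define r where "r = h mod 3"
      have hq: "h = 3*q + r" "r < 3" by (simp_all add: q_def r_def)
      have "restrict (Xf (restrict (\<lambda>i. (x (3*i), x (3*i+1), x (3*i+2))) {..<v})) {..<3*v} h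
          = comp3 (x (3*q), x (3*q+1), x (3*q+2)) r"
        using True d hq(2) unfolding hq(1) q_def[symmetric] by (simp add: Xf_3i)
      also have "\<dots> = x (3*q + r)"
      proof -
        have "r = 0 \<or> r = 1 \<or> r = 2" using hq(2) by arith
        thus ?thesis by (auto simp: comp3_def)
      qed
      finally show ?thesis using hq(1) by simp
    next
      case False thus ?thesis using x by (simp add: PiE_def extensional_def)
    qed
  qed
qed

lemma bij_betw_filter:
  assumes "bij_betw f A B" "\<And>a. a \<in> A \<Longrightarrow> P a \<longleftrightarrow> Q (f a)"
  shows "bij_betw f {a\<in>A. P a} {b\<in>B. Q b}"
  using assms unfolding bij_betw_def inj_on_def by auto

lemma Psi0:
  assumes o: "otg v e"
  shows "Psi N v e 0 = (\<Sum>\<epsilon>\<in>EPS v. sgnp \<epsilon> v * of_nat N ^ Fc v e \<epsilon>)"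
  unfolding Psi_def
proof (rule sum.cong[OF refl])
  fix \<epsilon>
  note P = Ed_props[OF o]
  let ?H = "{..<3*v}"
  let ?Q = "\<lambda>x. \<forall>h\<in>Ed v e. x (rho \<epsilon> h) = x (e h) \<and> x h = x (rho \<epsilon> (e h))"
  let ?Q' = "\<lambda>x. \<forall>h\<in>?H. x h = x (rho \<epsilon> (e h))"
  have "(\<Sum>y\<in>YS N v. \<Prod>h\<in>Ed v e. Pl 0 (Xf y h) (Xf y (rho \<epsilon> h)) (Xf y (e h)) (Xf y (rho \<epsilon> (e h))))
      = (\<Sum>y\<in>YS N v. if ?Q (Xf y) then 1 else 0)"
    by (intro sum.cong refl) (simp add: Pl_def prod_ind eq_commute)
  also have "\<dots> = of_nat (card {y \<in> YS N v. ?Q (Xf y)})" by (rule sum_ind) simp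
  also have "card {y \<in> YS N v. ?Q (Xf y)} = card {x \<in> PiE ?H (\<lambda>_. {..<N}). ?Q' x}"
  proof (rule bij_betw_same_card, rule bij_betw_filter[OF Xf_restrict_bij])
    fix y assume "y \<in> YS N v"
    let ?x = "restrict (Xf y) ?H"
    have "?Q (Xf y) \<longleftrightarrow> ?Q ?x"
      using P(6,7) rho_lt by (simp add: Ball_def)
    also have "?Q ?x \<longleftrightarrow> ?Q' ?x"
    proof
      assume q: "?Q ?x"
      show "?Q' ?x"
      proof
        fix h assume h: "h \<in> ?H"
        show "?x h = ?x (rho \<epsilon> (e h))"
        proof (cases "h \<in> Ed v e")
          case True thus ?thesis using q by auto
        next
          case False
          hence "e h \<in> Ed v e" using P(5) h by auto
          thus ?thesis using q otgD(3)[OF o, of h] h by force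
        qed
      qed
    next
      assume q: "?Q' ?x"
      show "?Q ?x"
      proof
        fix h assume h: "h \<in> Ed v e"
        have hH: "h \<in> ?H" "e h \<in> ?H" using h P(6,7) by auto
        have ee: "e (e h) = h" using otgD(3)[OF o, of h] hH by simp
        have a: "?x h = ?x (rho \<epsilon> (e h))" using q hH(1) by blast
        have b: "?x (e h) = ?x (rho \<epsilon> (e (e h)))" using q hH(2) by blast
        show "?x (rho \<epsilon> h) = ?x (e h) \<and> ?x h = ?x (rho \<epsilon> (e h))"
          using b[unfolded ee, symmetric] a by (rule conjI)
      qed
    qed
    finally show "?Q (Xf y) \<longleftrightarrow> ?Q' ?x" .
  qed
  also have "\<dots> = N ^ Fc v e \<epsilon>" unfolding Fc_def
    using count_inv[of ?H "\<lambda>h. rho \<epsilon> (e h)" "{..<N}"] otgD(1)[OF o] rho_lt by auto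
  finally show "sgnp \<epsilon> v * (\<Sum>y\<in>YS N v. \<Prod>h\<in>Ed v e. Pl 0 (Xf y h) (Xf y (rho \<epsilon> h)) (Xf y (e h)) (Xf y (rho \<epsilon> (e h))))
      = sgnp \<epsilon> v * of_nat N ^ Fc v e \<epsilon>" by simp
qed

definition BF :: "nat set \<Rightarrow> (nat \<Rightarrow> bool) set" where "BF X = PiE X (\<lambda>_. UNIV)"
definition xr :: "nat \<Rightarrow> (nat \<Rightarrow> bool) \<Rightarrow> (nat \<Rightarrow> bool) \<Rightarrow> nat \<Rightarrow> bool" where
  "xr v a b = restrict (\<lambda>h. a h \<noteq> b h) {..<3*v}"
definition CFs :: "nat \<Rightarrow> (nat \<Rightarrow> nat) \<Rightarrow> (nat \<Rightarrow> bool) \<Rightarrow> (nat \<Rightarrow> bool) set" where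
  "CFs v e \<epsilon> = {c \<in> BF {..<3*v}. \<forall>h\<in>{..<3*v}. c h = c (rho \<epsilon> (e h))}"
definition CEs :: "nat \<Rightarrow> (nat \<Rightarrow> nat) \<Rightarrow> (nat \<Rightarrow> bool) set" where
  "CEs v e = {g \<in> BF {..<3*v}. \<forall>h\<in>{..<3*v}. g h = g (e h)}"
definition Psb :: "nat \<Rightarrow> (nat \<Rightarrow> nat) \<Rightarrow> (nat \<Rightarrow> bool) \<Rightarrow> nat \<Rightarrow> bool" where
  "Psb v e c = restrict (\<lambda>h. c h \<noteq> c (e h)) {..<3*v}"
definition bd :: "nat \<Rightarrow> (nat \<Rightarrow> bool) \<Rightarrow> nat \<Rightarrow> bool" where
  "bd v g = restrict (\<lambda>i. g (3*i) \<noteq> (g (3*i+1) \<noteq> g (3*i+2))) {..<v}"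
definition ZZ :: "nat \<Rightarrow> (nat \<Rightarrow> nat) \<Rightarrow> (nat \<Rightarrow> bool) set" where
  "ZZ v e = {g \<in> CEs v e. \<forall>i<v. \<not> bd v g i}"
definition KER :: "nat \<Rightarrow> (nat \<Rightarrow> nat) \<Rightarrow> (nat \<Rightarrow> bool) \<Rightarrow> (nat \<Rightarrow> bool) set" where
  "KER v e \<epsilon> = {c \<in> CFs v e \<epsilon>. \<forall>h\<in>{..<3*v}. c h = c (e h)}"

lemma finite_BF[simp]: "finite X \<Longrightarrow> finite (BF X)" by (simp add: BF_def finite_PiE)
lemma card_BF: "finite X \<Longrightarrow> card (BF X) = 2 ^ card X" by (simp add: BF_def card_PiE)

lemma BF_ext: "a \<in> BF X \<Longrightarrow> b \<in> BF X \<Longrightarrow> (\<And>h. h \<in> X \<Longrightarrow> a h = b h) \<Longrightarrow> a = b"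
  unfolding BF_def by (rule PiE_ext)

lemma restrict_BF[simp]: "restrict f X \<in> BF X" by (simp add: BF_def)

lemma card_CF: "otg v e \<Longrightarrow> card (CFs v e \<epsilon>) = 2 ^ Fc v e \<epsilon>"
  using count_inv[of "{..<3*v}" "\<lambda>h. rho \<epsilon> (e h)" "UNIV :: bool set"] otgD(1) rho_lt
  by (auto simp: CFs_def BF_def Fc_def)

lemma finite_CF[simp]: "finite (CFs v e \<epsilon>)" by (simp add: CFs_def)
lemma finite_CE[simp]: "finite (CEs v e)" by (simp add: CEs_def)
lemma finite_ZZ[simp]: "finite (ZZ v e)" by (simp add: ZZ_def)
lemma finite_KER[simp]: "finite (KER v e \<epsilon>)" by (simp add: KER_def)

lemma xr_self: "a \<in> BF {..<3*v} \<Longrightarrow> b \<in> BF {..<3*v} \<Longrightarrow> xr v (xr v a b) b = a"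
  by (rule BF_ext[of _ "{..<3*v}"]) (auto simp: xr_def)

lemma xr_CF: assumes o: "otg v e" and "a \<in> CFs v e \<epsilon>" "b \<in> CFs v e \<epsilon>" shows "xr v a b \<in> CFs v e \<epsilon>"
  using assms otgD(1)[OF o] rho_lt by (auto simp: CFs_def xr_def)

lemma xr_CE: assumes o: "otg v e" and "a \<in> CEs v e" "b \<in> CEs v e" shows "xr v a b \<in> CEs v e"
  using assms otgD(1)[OF o] by (auto simp: CEs_def xr_def)

lemma bd_xr: "i < v \<Longrightarrow> bd v (xr v a b) i = (bd v a i \<noteq> bd v b i)"
  by (auto simp: bd_def xr_def)

lemma KER_sub: assumes o: "otg v e" and cn: "otg_connected v e"
  shows "KER v e \<epsilon> \<subseteq> {restrict (\<lambda>_. True) {..<3*v}, restrict (\<lambda>_. False) {..<3*v}}"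
proof
  fix c assume c: "c \<in> KER v e \<epsilon>"
  hence cB: "c \<in> BF {..<3*v}" and c1: "\<And>h. h < 3*v \<Longrightarrow> c h = c (rho \<epsilon> (e h))"
    and c2: "\<And>h. h < 3*v \<Longrightarrow> c h = c (e h)" by (auto simp: KER_def CFs_def)
  have cr: "c h = c (rho \<epsilon> h)" if h: "h < 3*v" for h
  proof -
    have "c (e h) = c (rho \<epsilon> (e (e h)))" using c1 otgD(1)[OF o h] by blast
    thus ?thesis using c2[OF h] otgD(3)[OF o h] by simp
  qed
  have blk: "c (3*i) = c (3*i+1) \<and> c (3*i+1) = c (3*i+2)" if i: "i < v" for i
  proof -
    have "3*i < 3*v" "3*i+1 < 3*v" "3*i+2 < 3*v" using i by auto
    hence a: "c (3*i) = c (rho \<epsilon> (3*i))" "c (3*i+1) = c (rho \<epsilon> (3*i+1))" "c (3*i+2) = c (rho \<epsilon> (3*i+2))"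
      using cr by blast+
    have r: "rho \<epsilon> (3*i) = 3*i + rot (\<epsilon> i) 0" "rho \<epsilon> (3*i+1) = 3*i + rot (\<epsilon> i) 1" "rho \<epsilon> (3*i+2) = 3*i + rot (\<epsilon> i) 2"
      using rho_3i[of 0 \<epsilon> i] rho_3i[of 1 \<epsilon> i] rho_3i[of 2 \<epsilon> i] by simp_all
    show ?thesis using a unfolding r by (cases "\<epsilon> i") (simp_all add: rot_def)
  qed
  have cv: "c h = c (3 * (h div 3))" if h: "h < 3*v" for h
  proof -
    have hd: "h div 3 < v" using h by simp
    have "h = 3 * (h div 3) + h mod 3" by simp
    moreover have "h mod 3 = 0 \<or> h mod 3 = 1 \<or> h mod 3 = 2" by arith
    ultimately have "h = 3 * (h div 3) \<or> h = 3 * (h div 3) + 1 \<or> h = 3 * (h div 3) + 2" by auto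
    thus ?thesis using blk[OF hd] by auto
  qed
  have adj: "c (3*i) = c (3*j)" if A: "otg_adj v e i j" for i j
  proof -
    obtain h where h: "h < 3*v" "h div 3 = i" "e h div 3 = j" using A by (auto simp: otg_adj_def)
    have "c (3*i) = c h" using cv[OF h(1)] h(2) by simp
    also have "\<dots> = c (e h)" using c2[OF h(1)] .
    also have "\<dots> = c (3*j)" using cv[OF otgD(1)[OF o h(1)]] h(3) by simp
    finally show ?thesis .
  qed
  have path: "(otg_adj v e)\<^sup>*\<^sup>* i j \<Longrightarrow> c (3*i) = c (3*j)" for i j
    by (induction rule: rtranclp_induct) (auto dest: adj)
  have "c = restrict (\<lambda>_. c 0) {..<3*v}"
  proof (rule BF_ext[OF cB restrict_BF])
    fix h assume h: "h \<in> {..<3*v}"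
    hence hd: "h div 3 < v" by simp
    hence "(otg_adj v e)\<^sup>*\<^sup>* 0 (h div 3)" using cn by (simp add: otg_connected_def)
    hence "c (3*0) = c (3 * (h div 3))" by (rule path)
    hence "c 0 = c (3 * (h div 3))" by simp
    moreover have "c h = c (3 * (h div 3))" using h by (intro cv) simp
    ultimately show "c h = restrict (\<lambda>_. c 0) {..<3*v} h" using h by simp
  qed
  thus "c \<in> {restrict (\<lambda>_. True) {..<3*v}, restrict (\<lambda>_. False) {..<3*v}}"
    by (cases "c 0") auto
qed

lemma card_KER: assumes "otg v e" "otg_connected v e" shows "card (KER v e \<epsilon>) \<le> 2"
proof -
  have "card (KER v e \<epsilon>) \<le> card {restrict (\<lambda>_. True) {..<3*v}, restrict (\<lambda>_. False) {..<3*v}}"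
    by (rule card_mono) (use KER_sub[OF assms] in auto)
  also have "\<dots> \<le> 2" by (simp add: card_insert_if)
  finally show ?thesis .
qed

lemma card_CF_le:
  assumes o: "otg v e" and cn: "otg_connected v e"
  shows "card (CFs v e \<epsilon>) \<le> card (Psb v e ` CFs v e \<epsilon>) * 2"
proof -
  let ?CF = "CFs v e \<epsilon>"
  define pick where "pick = (\<lambda>y. SOME c. c \<in> ?CF \<and> Psb v e c = y)"
  have pk: "pick (Psb v e c) \<in> ?CF \<and> Psb v e (pick (Psb v e c)) = Psb v e c" if "c \<in> ?CF" for c
    unfolding pick_def by (rule someI[of _ c]) (use that in simp)
  define f where "f = (\<lambda>c. (Psb v e c, xr v c (pick (Psb v e c))))"
  have inKER: "xr v c (pick (Psb v e c)) \<in> KER v e \<epsilon>" if c: "c \<in> ?CF" for c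
  proof -
    let ?p = "pick (Psb v e c)"
    have p: "?p \<in> ?CF" "Psb v e ?p = Psb v e c" using pk[OF c] by auto
    have "xr v c ?p \<in> ?CF" by (rule xr_CF[OF o c p(1)])
    moreover have "xr v c ?p h = xr v c ?p (e h)" if h: "h \<in> {..<3*v}" for h
    proof -
      have "Psb v e ?p h = Psb v e c h" using p(2) by simp
      hence "(?p h \<noteq> ?p (e h)) = (c h \<noteq> c (e h))" using h by (simp add: Psb_def)
      thus ?thesis using h otgD(1)[OF o, of h] by (auto simp: xr_def)
    qed
    ultimately show ?thesis by (simp add: KER_def)
  qed
  have inj: "inj_on f ?CF"
  proof
    fix c c' assume c: "c \<in> ?CF" and c': "c' \<in> ?CF" and eq: "f c = f c'"
    hence ps: "Psb v e c = Psb v e c'" and x: "xr v c (pick (Psb v e c)) = xr v c' (pick (Psb v e c))"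
      by (auto simp: f_def)
    have B: "c \<in> BF {..<3*v}" "c' \<in> BF {..<3*v}" "pick (Psb v e c) \<in> BF {..<3*v}"
      using c c' pk[OF c] by (auto simp: CFs_def)
    have "c = xr v (xr v c (pick (Psb v e c))) (pick (Psb v e c))" using xr_self[OF B(1,3)] by simp
    also have "\<dots> = c'" unfolding x using xr_self[OF B(2,3)] .
    finally show "c = c'" .
  qed
  have "card ?CF = card (f ` ?CF)" using card_image[OF inj] by simp
  also have "\<dots> \<le> card (Psb v e ` ?CF \<times> KER v e \<epsilon>)"
    by (rule card_mono) (auto simp: f_def inKER finite_cartesian_product)
  also have "\<dots> = card (Psb v e ` ?CF) * card (KER v e \<epsilon>)" by (rule card_cartesian_product)
  also have "\<dots> \<le> card (Psb v e ` ?CF) * 2" using card_KER[OF o cn] by simp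
  finally show ?thesis .
qed

lemma Psb_ZZ:
  assumes o: "otg v e" and c: "c \<in> CFs v e \<epsilon>"
  shows "Psb v e c \<in> ZZ v e"
proof -
  have c1: "\<And>h. h < 3*v \<Longrightarrow> c h = c (rho \<epsilon> (e h))" using c by (auto simp: CFs_def)
  have ce: "c (e d) = c (rho \<epsilon> d)" if d: "d < 3*v" for d
    using c1[OF otgD(1)[OF o d]] otgD(3)[OF o d] by simp
  have "Psb v e c \<in> CEs v e"
  proof -
    have "Psb v e c h = Psb v e c (e h)" if h: "h \<in> {..<3*v}" for h
      using h otgD(1,3)[OF o, of h] by (auto simp: Psb_def)
    thus ?thesis by (simp add: CEs_def Psb_def)
  qed
  moreover have "\<not> bd v (Psb v e c) i" if i: "i < v" for i
  proof -
    have lt: "3*i < 3*v" "3*i+1 < 3*v" "3*i+2 < 3*v" using i by auto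
    have r: "rho \<epsilon> (3*i) = 3*i + rot (\<epsilon> i) 0" "rho \<epsilon> (3*i+1) = 3*i + rot (\<epsilon> i) 1" "rho \<epsilon> (3*i+2) = 3*i + rot (\<epsilon> i) 2"
      using rho_3i[of 0 \<epsilon> i] rho_3i[of 1 \<epsilon> i] rho_3i[of 2 \<epsilon> i] by simp_all
    have "bd v (Psb v e c) i = ((c (3*i) \<noteq> c (rho \<epsilon> (3*i))) \<noteq> ((c (3*i+1) \<noteq> c (rho \<epsilon> (3*i+1))) \<noteq> (c (3*i+2) \<noteq> c (rho \<epsilon> (3*i+2)))))"
      using i lt by (simp add: bd_def Psb_def ce)
    thus ?thesis unfolding r by (cases "\<epsilon> i") (auto simp: rot_def)
  qed
  ultimately show ?thesis by (simp add: ZZ_def)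
qed

lemma bd_ZZ: "z \<in> ZZ v e \<Longrightarrow> i < v \<Longrightarrow> bd v (xr v z g) i = bd v g i"
  using bd_xr[of i v z g] by (simp add: ZZ_def)

lemma card_bd_ZZ:
  assumes o: "otg v e"
  shows "card (bd v ` CEs v e) * card (ZZ v e) \<le> card (CEs v e)"
proof -
  let ?CE = "CEs v e"
  define pk where "pk = (\<lambda>w. SOME g. g \<in> ?CE \<and> bd v g = w)"
  have pk: "pk w \<in> ?CE \<and> bd v (pk w) = w" if W: "w \<in> bd v ` ?CE" for w
  proof -
    obtain g where g: "g \<in> ?CE" "w = bd v g" using W by blast
    show ?thesis unfolding pk_def by (rule someI[of _ g]) (use g in blast)
  qed
  define f where "f = (\<lambda>(w, z). xr v z (pk w))"
  have inj: "inj_on f (bd v ` ?CE \<times> ZZ v e)"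
  proof
    fix p p' assume p: "p \<in> bd v ` ?CE \<times> ZZ v e" and p': "p' \<in> bd v ` ?CE \<times> ZZ v e" and eq: "f p = f p'"
    obtain w z where wz: "p = (w, z)" by (cases p)
    obtain w' z' where wz': "p' = (w', z')" by (cases p')
    have w: "w \<in> bd v ` ?CE" "z \<in> ZZ v e" "w' \<in> bd v ` ?CE" "z' \<in> ZZ v e" using p p' wz wz' by auto
    have eq2: "xr v z (pk w) = xr v z' (pk w')" using eq wz wz' by (simp add: f_def)
    have "w = w'"
    proof
      fix i show "w i = w' i"
      proof (cases "i < v")
        case True
        have "w i = bd v (pk w) i" using pk[OF w(1)] by simp
        also have "\<dots> = bd v (xr v z (pk w)) i" using bd_ZZ[OF w(2) True] by simp
        also have "\<dots> = bd v (xr v z' (pk w')) i" using eq2 by simp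
        also have "\<dots> = bd v (pk w') i" using bd_ZZ[OF w(4) True] by simp
        also have "\<dots> = w' i" using pk[OF w(3)] by simp
        finally show ?thesis .
      next
        case False
        obtain g g' where "w = bd v g" "w' = bd v g'" using w(1,3) by auto
        thus ?thesis using False by (simp add: bd_def)
      qed
    qed
    have B: "z \<in> BF {..<3*v}" "z' \<in> BF {..<3*v}" "pk w \<in> BF {..<3*v}"
      using w pk[OF w(1)] by (auto simp: ZZ_def CEs_def)
    have "z = xr v (xr v z (pk w)) (pk w)" using xr_self[OF B(1,3)] by simp
    also have "\<dots> = xr v (xr v z' (pk w')) (pk w')" using eq2 \<open>w = w'\<close> by (simp only:)
    also have "\<dots> = z'" using xr_self[OF B(2) B(3)[unfolded \<open>w = w'\<close>]] .
    finally show "p = p'" using wz wz' \<open>w = w'\<close> by simp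
  qed
  have sub: "f ` (bd v ` ?CE \<times> ZZ v e) \<subseteq> ?CE"
  proof
    fix x assume "x \<in> f ` (bd v ` ?CE \<times> ZZ v e)"
    then obtain w z where w: "w \<in> bd v ` ?CE" "z \<in> ZZ v e" "x = xr v z (pk w)" by (auto simp: f_def)
    show "x \<in> ?CE" unfolding w(3) by (rule xr_CE[OF o]) (use w pk in \<open>auto simp: ZZ_def\<close>)
  qed
  have "card (bd v ` ?CE) * card (ZZ v e) = card (bd v ` ?CE \<times> ZZ v e)" by (simp add: card_cartesian_product)
  also have "\<dots> = card (f ` (bd v ` ?CE \<times> ZZ v e))" using card_image[OF inj] by simp
  also have "\<dots> \<le> card ?CE" by (rule card_mono[OF _ sub]) simp
  finally show ?thesis .
qed

lemma card_CE_le: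
  assumes o: "otg v e"
  shows "card (CEs v e) \<le> 2 ^ card (Ed v e)"
proof -
  note P = Ed_props[OF o]
  have inj: "inj_on (\<lambda>g. restrict g (Ed v e)) (CEs v e)"
  proof
    fix g g' assume g: "g \<in> CEs v e" and g': "g' \<in> CEs v e" and eq: "restrict g (Ed v e) = restrict g' (Ed v e)"
    have eqE: "g h = g' h" if "h \<in> Ed v e" for h using eq that by (metis restrict_apply')
    show "g = g'"
    proof (rule BF_ext[of _ "{..<3*v}"])
      show "g \<in> BF {..<3*v}" "g' \<in> BF {..<3*v}" using g g' by (auto simp: CEs_def)
      fix h assume h: "h \<in> {..<3*v}"
      show "g h = g' h"
      proof (cases "h \<in> Ed v e")
        case True thus ?thesis by (rule eqE)
      next
        case False
        hence "e h \<in> Ed v e" using P(5) h by auto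
        moreover have "g h = g (e h)" "g' h = g' (e h)" using g g' h by (auto simp: CEs_def)
        ultimately show ?thesis using eqE by simp
      qed
    qed
  qed
  have "card (CEs v e) = card ((\<lambda>g. restrict g (Ed v e)) ` CEs v e)" using card_image[OF inj] by simp
  also have "\<dots> \<le> card (BF (Ed v e))" by (rule card_mono) auto
  also have "\<dots> = 2 ^ card (Ed v e)" by (simp add: card_BF)
  finally show ?thesis .
qed

lemma card_Ed: assumes o: "otg v e" shows "2 * card (Ed v e) = 3 * v"
proof -
  note P = Ed_props[OF o]
  have "3 * v = card (Ed v e \<union> e ` Ed v e)" using P(1) by (metis card_lessThan)
  also have "\<dots> = card (Ed v e) + card (e ` Ed v e)" by (rule card_Un_disjoint) (use P(2) in auto)
  also have "card (e ` Ed v e) = card (Ed v e)" by (rule card_image[OF P(3)])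
  finally show ?thesis by simp
qed

lemma xor3_point: "((3*k = p) \<noteq> ((3*k+1 = p) \<noteq> (3*k+2 = (p::nat)))) = (p div 3 = k)"
  by presburger

definition zeroB :: "nat \<Rightarrow> nat \<Rightarrow> bool" where "zeroB v = restrict (\<lambda>_. False) {..<3*v}"
definition edgeB :: "nat \<Rightarrow> (nat \<Rightarrow> nat) \<Rightarrow> nat \<Rightarrow> nat \<Rightarrow> bool" where
  "edgeB v e h = restrict (\<lambda>d. d = h \<or> d = e h) {..<3*v}"

lemma zeroB_CE: "otg v e \<Longrightarrow> zeroB v \<in> CEs v e"
  using otgD(1) by (auto simp: zeroB_def CEs_def)

lemma bd_zeroB: "bd v (zeroB v) k = False" if "k < v"
  using that by (simp add: bd_def zeroB_def)

lemma edgeB_CE: assumes o: "otg v e" and h: "h < 3*v" shows "edgeB v e h \<in> CEs v e"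
proof -
  have "(d = h \<or> d = e h) = (e d = h \<or> e d = e h)" if d: "d < 3*v" for d
    using otgD(3)[OF o d] otgD(3)[OF o h] by metis
  thus ?thesis using otgD(1)[OF o] by (auto simp: edgeB_def CEs_def)
qed

lemma bd_edgeB: assumes o: "otg v e" and h: "h < 3*v" and k: "k < v"
  shows "bd v (edgeB v e h) k = ((h div 3 = k) \<noteq> (e h div 3 = k))"
proof -
  have ne: "e h \<noteq> h" using otgD(2)[OF o h] .
  have lt: "3*k < 3*v" "3*k+1 < 3*v" "3*k+2 < 3*v" using k by auto
  have x: "(d = h \<or> d = e h) = ((d = h) \<noteq> (d = e h))" for d using ne by auto
  have "bd v (edgeB v e h) k = (((3*k = h) \<noteq> (3*k = e h)) \<noteq> (((3*k+1 = h) \<noteq> (3*k+1 = e h)) \<noteq> ((3*k+2 = h) \<noteq> (3*k+2 = e h))))"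
    using k lt by (simp add: bd_def edgeB_def x)
  also have "\<dots> = (((3*k = h) \<noteq> ((3*k+1 = h) \<noteq> (3*k+2 = h))) \<noteq> ((3*k = e h) \<noteq> ((3*k+1 = e h) \<noteq> (3*k+2 = e h))))"
    by blast
  also have "\<dots> = ((h div 3 = k) \<noteq> (e h div 3 = k))" by (simp only: xor3_point)
  finally show ?thesis .
qed

lemma pair_el:
  assumes o: "otg v e" and p: "(otg_adj v e)\<^sup>*\<^sup>* 0 j"
  shows "\<exists>g\<in>CEs v e. \<forall>k<v. bd v g k = ((k = 0) \<noteq> (k = j))"
  using p
proof (induction rule: rtranclp_induct)
  case base
  show ?case by (rule bexI[OF _ zeroB_CE[OF o]]) (simp add: bd_zeroB)
next
  case (step a b)
  obtain g where g: "g \<in> CEs v e" "\<forall>k<v. bd v g k = ((k = 0) \<noteq> (k = a))" using step.IH by blast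
  obtain h where h: "h < 3*v" "h div 3 = a" "e h div 3 = b" using step.hyps(2) by (auto simp: otg_adj_def)
  have "xr v g (edgeB v e h) \<in> CEs v e" by (rule xr_CE[OF o g(1) edgeB_CE[OF o h(1)]])
  moreover have "bd v (xr v g (edgeB v e h)) k = ((k = 0) \<noteq> (k = b))" if k: "k < v" for k
  proof -
    have 1: "bd v (xr v g (edgeB v e h)) k = (bd v g k \<noteq> bd v (edgeB v e h) k)" by (rule bd_xr[OF k])
    have 2: "bd v g k = ((k = 0) \<noteq> (k = a))" using g(2) k by blast
    have 3: "bd v (edgeB v e h) k = ((k = a) \<noteq> (k = b))" using bd_edgeB[OF o h(1) k] h(2,3) by auto
    show ?thesis unfolding 1 2 3 by blast
  qed
  ultimately show ?case by blast
qed

lemma subset_el: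
  assumes o: "otg v e" and cn: "otg_connected v e" and S: "S \<subseteq> {1..<v}"
  shows "\<exists>g\<in>CEs v e. \<forall>k\<in>{1..<v}. bd v g k = (k \<in> S)"
proof -
  have "finite S" using S finite_subset by blast
  thus ?thesis using S
  proof (induction S rule: finite_induct)
    case empty
    show ?case by (rule bexI[OF _ zeroB_CE[OF o]]) (simp add: bd_zeroB)
  next
    case (insert j S)
    obtain g where g: "g \<in> CEs v e" "\<forall>k\<in>{1..<v}. bd v g k = (k \<in> S)" using insert by blast
    have j: "j < v" using insert.prems by auto
    hence "(otg_adj v e)\<^sup>*\<^sup>* 0 j" using cn by (simp add: otg_connected_def)
    then obtain g' where g': "g' \<in> CEs v e" "\<forall>k<v. bd v g' k = ((k = 0) \<noteq> (k = j))"
      using pair_el[OF o] by blast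
    have "xr v g g' \<in> CEs v e" by (rule xr_CE[OF o g(1) g'(1)])
    moreover have "bd v (xr v g g') k = (k \<in> insert j S)" if k: "k \<in> {1..<v}" for k
    proof -
      have kv: "k < v" "k \<noteq> 0" using k by auto
      have 1: "bd v (xr v g g') k = (bd v g k \<noteq> bd v g' k)" by (rule bd_xr[OF kv(1)])
      have 2: "bd v g k = (k \<in> S)" using g(2) k by blast
      have 3: "bd v g' k = (k = j)" using g'(2) kv by auto
      show ?thesis unfolding 1 2 3 using insert.hyps(2) by auto
    qed
    ultimately show ?case by blast
  qed
qed

lemma card_bd_ge:
  assumes o: "otg v e" and cn: "otg_connected v e"
  shows "2 ^ (v - 1) \<le> card (bd v ` CEs v e)"
proof -
  define gS where "gS = (\<lambda>S. SOME g. g \<in> CEs v e \<and> (\<forall>k\<in>{1..<v}. bd v g k = (k \<in> S)))"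
  have gS: "gS S \<in> CEs v e \<and> (\<forall>k\<in>{1..<v}. bd v (gS S) k = (k \<in> S))" if SP: "S \<in> Pow {1..<v}" for S
  proof -
    have "S \<subseteq> {1..<v}" using SP by simp
    from subset_el[OF o cn this] obtain g where g: "g \<in> CEs v e \<and> (\<forall>k\<in>{1..<v}. bd v g k = (k \<in> S))" by blast
    show ?thesis unfolding gS_def by (rule someI[of _ g]) (rule g)
  qed
  have inj: "inj_on (\<lambda>S. bd v (gS S)) (Pow {1..<v})"
  proof
    fix S S' assume S: "S \<in> Pow {1..<v}" and S': "S' \<in> Pow {1..<v}" and eq: "bd v (gS S) = bd v (gS S')"
    have "S = {k \<in> {1..<v}. bd v (gS S) k}" using gS[OF S] S by auto
    also have "\<dots> = {k \<in> {1..<v}. bd v (gS S') k}" using eq by simp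
    also have "\<dots> = S'" using gS[OF S'] S' by auto
    finally show "S = S'" .
  qed
  have "2 ^ (v - 1) = card (Pow {1..<v})" by (simp add: card_Pow)
  also have "\<dots> = card ((\<lambda>S. bd v (gS S)) ` Pow {1..<v})" using card_image[OF inj] by simp
  also have "\<dots> \<le> card (bd v ` CEs v e)"
    by (rule card_mono) (use gS in auto)
  finally show ?thesis .
qed

lemma deg_bound:
  assumes o: "otg v e" and cn: "otg_connected v e"
  shows "2 * Fc v e \<epsilon> \<le> v + 4"
proof (cases "v = 0")
  case True thus ?thesis by (simp add: Fc_def)
next
  case False
  have a: "2 ^ Fc v e \<epsilon> \<le> card (ZZ v e) * 2"
  proof -
    have "2 ^ Fc v e \<epsilon> = card (CFs v e \<epsilon>)" using card_CF[OF o] by simp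
    also have "\<dots> \<le> card (Psb v e ` CFs v e \<epsilon>) * 2" by (rule card_CF_le[OF o cn])
    also have "card (Psb v e ` CFs v e \<epsilon>) \<le> card (ZZ v e)"
      by (rule card_mono) (auto intro: Psb_ZZ[OF o])
    finally show ?thesis by simp
  qed
  have b: "2 ^ (v - 1) * card (ZZ v e) \<le> 2 ^ card (Ed v e)"
  proof -
    have "2 ^ (v - 1) * card (ZZ v e) \<le> card (bd v ` CEs v e) * card (ZZ v e)"
      using card_bd_ge[OF o cn] by simp
    also have "\<dots> \<le> card (CEs v e)" by (rule card_bd_ZZ[OF o])
    also have "\<dots> \<le> 2 ^ card (Ed v e)" by (rule card_CE_le[OF o])
    finally show ?thesis .
  qed
  have "(2::nat) ^ (v - 1 + Fc v e \<epsilon>) = 2 ^ (v - 1) * 2 ^ Fc v e \<epsilon>" by (simp add: power_add)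
  also have "\<dots> \<le> 2 ^ (v - 1) * (card (ZZ v e) * 2)" using a by simp
  also have "\<dots> \<le> 2 ^ card (Ed v e) * 2" using b by simp
  also have "\<dots> = 2 ^ (card (Ed v e) + 1)" by simp
  finally have p: "(2::nat) ^ (v - 1 + Fc v e \<epsilon>) \<le> 2 ^ (card (Ed v e) + 1)" .
  have "v - 1 + Fc v e \<epsilon> \<le> card (Ed v e) + 1" by (rule power_le_imp_le_exp[OF _ p]) simp
  thus ?thesis using card_Ed[OF o] False by linarith
qed

lemma W_Psi:
  assumes o: "otg v e" and N: "N \<ge> 2" and B: "sl_basis N B"
  shows "W_sl N B v e = Psi N v e (1 / of_nat N)"
  unfolding W1[OF o] Psi_def
proof (intro sum.cong refl arg_cong2[where f = times] prod.cong)
  fix \<epsilon> y h assume y: "y \<in> YS N v" and h: "h \<in> Ed v e"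
  note P = Ed_props[OF o]
  have hh: "h < 3*v" "e h < 3*v" using h P(6,7) by auto
  have lt: "Xf y h < N" "Xf y (rho \<epsilon> h) < N" "Xf y (e h) < N" "Xf y (rho \<epsilon> (e h)) < N"
    using Xf_lt[OF y] rho_lt hh by auto
  show "Pw N B (Xf y h) (Xf y (rho \<epsilon> h)) (Xf y (e h)) (Xf y (rho \<epsilon> (e h)))
      = Pl (1 / of_nat N) (Xf y h) (Xf y (rho \<epsilon> h)) (Xf y (e h)) (Xf y (rho \<epsilon> (e h)))"
    unfolding Pw_def completeness[OF N B lt] by (simp add: Pl_def)
qed

theorem mainTheorem1:
  fixes v :: nat and e :: "nat \<Rightarrow> nat"
  assumes "otg v e" and "otg_connected v e"
  shows "\<exists>p :: complex poly. real (degree p) \<le> real v / 2 + 2 \<and>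
           (\<forall>N \<ge> 2. \<forall>B. sl_basis N B \<longrightarrow> W_sl N B v e = poly p (of_nat N))"
proof -
  define p where "p = (\<Sum>\<epsilon>\<in>EPS v. monom (sgnp \<epsilon> v) (Fc v e \<epsilon>))"
  have "degree p \<le> (v + 4) div 2" unfolding p_def
  proof (rule degree_sum_le)
    fix \<epsilon>
    have "degree (monom (sgnp \<epsilon> v) (Fc v e \<epsilon>)) \<le> Fc v e \<epsilon>" by (rule degree_monom_le)
    also have "\<dots> \<le> (v + 4) div 2" using deg_bound[OF assms, of \<epsilon>] by linarith
    finally show "degree (monom (sgnp \<epsilon> v) (Fc v e \<epsilon>)) \<le> (v + 4) div 2" .
  qed simp
  hence "2 * degree p \<le> v + 4" by linarith
  hence "real (2 * degree p) \<le> real (v + 4)" by (simp only: of_nat_le_iff)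
  hence deg: "real (degree p) \<le> real v / 2 + 2" by simp
  have val: "W_sl N B v e = poly p (of_nat N)" if N: "N \<ge> 2" and B: "sl_basis N B" for N B
  proof -
    have "W_sl N B v e = Psi N v e (1 / of_nat N)" by (rule W_Psi[OF assms(1) N B])
    also have "\<dots> = Psi N v e 0" by (rule cancel[OF assms(1)])
    also have "\<dots> = (\<Sum>\<epsilon>\<in>EPS v. sgnp \<epsilon> v * of_nat N ^ Fc v e \<epsilon>)" by (rule Psi0[OF assms(1)])
    also have "\<dots> = poly p (of_nat N)" by (simp add: p_def poly_sum poly_monom)
    finally show ?thesis .
  qed
  show ?thesis using deg val by blast
qed

end
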